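(* Let $\rho$ be a probability distribution on $\mathbb{R}^d\times\mathbb{R}$ with $\mathbb{E}\|a\|^2<\infty$, $\mathbb{E}[b^2]<\infty$, $H=\mathbb{E}[aa^\top]$ invertible with largest eigenvalue $L$, and let $x_*$ minimize $\mathcal{R}(x)=\frac12\mathbb{E}_\rho(\langle x,a\rangle-b)^2$. Assume there is a finite constant $\kappa$ such that $\mathbb{E}[\langle a,Ma\rangle aa^\top]\preccurlyeq\kappa\,\mathrm{tr}(MH)H$ for every positive semidefinite $M$, and let $0<\alpha\le\beta\le 1/L$. Let $\theta^b_t$ be the bias process defined in the context started from $x_0$, and set $f_t=\langle\Upsilon,\mathbb{E}[\theta^b_t\otimes\theta^b_t]\rangle$. Then for every $T\ge0$, $$f_T\le\min\left\{\frac1\alpha,\frac{8(T+1)}{\beta}\right\}\|x_0-x_*\|^2+\sum_{k=0}^{T-1}g(T-k-1)\,f_k,$$ where the kernel is $g(s)=\kappa\left\langle\Upsilon,\ A^s\,\mathcal{N}\,(A^\top)^s\right\rangle$ for $s\ge0$.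
   Context: $\preccurlyeq$ is the Loewner order, $\langle\cdot,\cdot\rangle$ between matrices is the trace inner product, $\theta\otimes\theta=\theta\theta^\top$. Let $(a_t,b_t)_{t\ge0}$ be i.i.d. from $\rho$ and $J_t=\begin{bmatrix} I-\beta a_ta_t^\top & I-\beta a_ta_t^\top\\ -\alpha a_ta_t^\top & I-\alpha a_ta_t^\top\end{bmatrix}$. Bias process: $\theta^b_0=\begin{bmatrix}0\\ x_0-x_*\end{bmatrix}$, $\theta^b_{t+1}=J_t\theta^b_t$. Further $A=\mathbb{E}[J_t]=\begin{bmatrix}I-\beta H&I-\beta H\\-\alpha H&I-\alpha H\end{bmatrix}$, $\Upsilon=\begin{bmatrix}H&H\\H&H\end{bmatrix}$, $\mathcal{N}=\begin{bmatrix}\beta^2H&\alpha\beta H\\ \alpha\beta H&\alpha^2H\end{bmatrix}$. *)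

theory Defs
  imports "HOL-Probability.Probability"
begin

text \<open>Matrices are elements of real^'n^'n (rows indexed first). 2d-dimensional
  block vectors/matrices are indexed by the sum type 'd + 'd: Inl i is the first
  block, Inr i the second block.\<close>

definition mtrace :: "real^'n^'n \<Rightarrow> real" where
  "mtrace M = (\<Sum>i\<in>UNIV. M $ i $ i)"

definition tr_inner :: "real^'n^'n \<Rightarrow> real^'n^'n \<Rightarrow> real" where
  "tr_inner M N = mtrace (transpose M ** N)"

definition outer :: "real^'n \<Rightarrow> real^'n \<Rightarrow> real^'n^'n" where
  "outer x y = (\<chi> i j. x $ i * y $ j)"

primrec mpow :: "real^'n^'n \<Rightarrow> nat \<Rightarrow> real^'n^'n" where
  "mpow M 0 = mat 1"
| "mpow M (Suc k) = M ** mpow M k"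

definition psd :: "real^'n^'n \<Rightarrow> bool" where
  "psd M \<longleftrightarrow> transpose M = M \<and> (\<forall>x. 0 \<le> x \<bullet> (M *v x))"

definition loewner_le :: "real^'n^'n \<Rightarrow> real^'n^'n \<Rightarrow> bool" where
  "loewner_le M N \<longleftrightarrow> psd (N - M)"

definition block :: "real^'d^'d \<Rightarrow> real^'d^'d \<Rightarrow> real^'d^'d \<Rightarrow> real^'d^'d
    \<Rightarrow> real^('d + 'd)^('d + 'd)" where
  "block P Q R S = (\<chi> i j. case i of
      Inl i' \<Rightarrow> (case j of Inl j' \<Rightarrow> P $ i' $ j' | Inr j' \<Rightarrow> Q $ i' $ j')
    | Inr i' \<Rightarrow> (case j of Inl j' \<Rightarrow> R $ i' $ j' | Inr j' \<Rightarrow> S $ i' $ j'))"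

definition bvec :: "real^'d \<Rightarrow> real^'d \<Rightarrow> real^('d + 'd)" where
  "bvec u v = (\<chi> i. case i of Inl i' \<Rightarrow> u $ i' | Inr i' \<Rightarrow> v $ i')"

definition Jmat :: "real \<Rightarrow> real \<Rightarrow> real^'d \<Rightarrow> real^('d + 'd)^('d + 'd)" where
  "Jmat \<alpha> \<beta> a = block (mat 1 - \<beta> *\<^sub>R outer a a) (mat 1 - \<beta> *\<^sub>R outer a a)
                        (- (\<alpha> *\<^sub>R outer a a)) (mat 1 - \<alpha> *\<^sub>R outer a a)"

text \<open>Bias process driven by the sample sequence \<omega> = ((a_0,b_0),(a_1,b_1),...).\<close>
primrec bias :: "real \<Rightarrow> real \<Rightarrow> real^'d \<Rightarrow> real^'d \<Rightarrow> (nat \<Rightarrow> (real^'d) \<times> real)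
    \<Rightarrow> nat \<Rightarrow> real^('d + 'd)" where
  "bias \<alpha> \<beta> x0 xs \<omega> 0 = bvec 0 (x0 - xs)"
| "bias \<alpha> \<beta> x0 xs \<omega> (Suc t) = Jmat \<alpha> \<beta> (fst (\<omega> t)) *v bias \<alpha> \<beta> x0 xs \<omega> t"

end

theory Submission
  imports Defs
begin

lemma sum_UNIV_sum_type:
  fixes f :: "('a::finite + 'b::finite) \<Rightarrow> 'c::comm_monoid_add"
  shows "sum f UNIV = sum (\<lambda>i. f (Inl i)) UNIV + sum (\<lambda>i. f (Inr i)) UNIV"
proof -
  have "sum f UNIV = sum f (UNIV <+> UNIV)" by (simp add: UNIV_Plus_UNIV)
  also have "\<dots> = sum (f o Inl) UNIV + sum (f o Inr) UNIV" by (rule sum.Plus) auto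
  finally show ?thesis by (simp add: o_def)
qed

lemma mtrace_comm:
  fixes A :: "real^'k^'n" and B :: "real^'n^'k"
  shows "mtrace (A ** B) = mtrace (B ** A)"
proof -
  have "mtrace (A ** B) = (\<Sum>i\<in>UNIV. \<Sum>k\<in>UNIV. A$i$k * B$k$i)"
    unfolding mtrace_def matrix_matrix_mult_def by simp
  also have "\<dots> = (\<Sum>k\<in>UNIV. \<Sum>i\<in>UNIV. A$i$k * B$k$i)" by (rule sum.swap)
  also have "\<dots> = mtrace (B ** A)"
    unfolding mtrace_def matrix_matrix_mult_def by (simp add: mult.commute)
  finally show ?thesis .
qed

lemma tr_inner_sum: "tr_inner X Z = (\<Sum>i\<in>UNIV. \<Sum>j\<in>UNIV. X$i$j * Z$i$j)"
proof -
  have "tr_inner X Z = (\<Sum>j\<in>UNIV. \<Sum>i\<in>UNIV. X$i$j * Z$i$j)"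
    unfolding tr_inner_def mtrace_def matrix_matrix_mult_def transpose_def by simp
  also have "\<dots> = (\<Sum>i\<in>UNIV. \<Sum>j\<in>UNIV. X$i$j * Z$i$j)" by (rule sum.swap)
  finally show ?thesis .
qed

lemma quad_sum: "(x::real^'n) \<bullet> (Q *v x) = (\<Sum>i\<in>UNIV. \<Sum>j\<in>UNIV. Q$i$j * (x$i * x$j))"
  unfolding inner_vec_def matrix_vector_mult_def
  by (simp add: sum_distrib_left mult_ac)

lemma tr_inner_outer: "tr_inner Q (outer x x) = (x::real^'n) \<bullet> (Q *v x)"
  unfolding tr_inner_sum quad_sum outer_def by simp

lemma tr_inner_congr:
  fixes P :: "real^'n^'n"
  shows "tr_inner (transpose P ** X ** P) Z = tr_inner X (P ** Z ** transpose P)"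
proof -
  have "tr_inner (transpose P ** X ** P) Z = mtrace (transpose P ** (transpose X ** (P ** Z)))"
    unfolding tr_inner_def by (simp add: matrix_transpose_mul matrix_mul_assoc)
  also have "\<dots> = mtrace ((transpose X ** (P ** Z)) ** transpose P)" by (rule mtrace_comm)
  also have "\<dots> = tr_inner X (P ** Z ** transpose P)"
    unfolding tr_inner_def by (simp add: matrix_mul_assoc)
  finally show ?thesis .
qed

lemma sym_mat_inner:
  fixes H :: "real^'n^'n"
  assumes "transpose H = H"
  shows "(H *v z) \<bullet> y = z \<bullet> (H *v y)"
proof -
  have "(H *v z) \<bullet> y = (z v* H) \<bullet> y"
    using assms by (metis transpose_matrix_vector)
  also have "\<dots> = z \<bullet> (H *v y)" by (rule dot_lmul_matrix)
  finally show ?thesis .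
qed

lemma eigvec_exists:
  fixes H :: "real^'n^'n" and S :: "(real^'n) set"
  assumes symH: "transpose H = H" and sub: "subspace S" and inv: "\<And>y. y \<in> S \<Longrightarrow> H *v y \<in> S"
    and nz: "z0 \<in> S" "z0 \<noteq> 0"
  shows "\<exists>e\<in>S. norm e = 1 \<and> (\<exists>\<mu>. H *v e = \<mu> *\<^sub>R e)"
proof -
  let ?K = "S \<inter> sphere 0 1"
  have cK: "compact ?K"
    using closed_subspace[OF sub] by (intro closed_Int_compact) auto
  have "z0 /\<^sub>R norm z0 \<in> ?K" using nz sub by (auto simp: subspace_scale)
  then have neK: "?K \<noteq> {}" by blast
  have cont: "continuous_on ?K (\<lambda>y. y \<bullet> (H *v y))"
    by (intro continuous_intros)
  obtain e where eK: "e \<in> ?K" and emax: "\<And>y. y \<in> ?K \<Longrightarrow> y \<bullet> (H *v y) \<le> e \<bullet> (H *v e)"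
    using continuous_attains_sup[OF cK neK cont] by blast
  define \<mu> where "\<mu> = e \<bullet> (H *v e)"
  have eS: "e \<in> S" and ne: "norm e = 1" using eK by auto
  have ee: "e \<bullet> e = 1" using ne by (simp add: norm_eq_1)
  have bound: "z \<bullet> (H *v z) \<le> \<mu> * (z \<bullet> z)" if zS: "z \<in> S" for z
  proof (cases "z = 0")
    case True then show ?thesis by simp
  next
    case False
    have nz0: "norm z > 0" using False by simp
    have "z /\<^sub>R norm z \<in> ?K" using zS False sub by (auto simp: subspace_scale)
    then have "(z /\<^sub>R norm z) \<bullet> (H *v (z /\<^sub>R norm z)) \<le> \<mu>" using emax \<mu>_def by blast
    then have "(z \<bullet> (H *v z)) / (norm z)^2 \<le> \<mu>"
      by (simp add: matrix_vector_mult_scaleR inner_scaleR_left inner_scaleR_right power2_eq_square divide_inverse mult_ac)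
    then have "z \<bullet> (H *v z) \<le> \<mu> * (norm z)^2" using nz0 by (simp add: divide_le_eq)
    then show ?thesis by (simp add: power2_norm_eq_inner)
  qed
  define y where "y = \<mu> *\<^sub>R e - H *v e"
  have yS: "y \<in> S" unfolding y_def using eS inv sub by (simp add: subspace_diff subspace_scale)
  define c where "c = y \<bullet> (H *v y) - \<mu> * (y \<bullet> y)"
  have c_le: "c \<le> 0" using bound[OF yS] unfolding c_def by simp
  have key: "- 2 * t * (y \<bullet> y) + t^2 * c \<le> 0" for t :: real
  proof -
    have zS: "e + t *\<^sub>R y \<in> S" using eS yS sub by (simp add: subspace_add subspace_scale)
    have b: "(e + t *\<^sub>R y) \<bullet> (H *v (e + t *\<^sub>R y)) \<le> \<mu> * ((e + t *\<^sub>R y) \<bullet> (e + t *\<^sub>R y))"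
      using bound[OF zS] .
    have s1: "y \<bullet> (H *v e) = e \<bullet> (H *v y)" using sym_mat_inner[OF symH, of y e]
      by (simp add: inner_commute)
    have s2: "y \<bullet> (H *v e) - \<mu> * (e \<bullet> y) = - (y \<bullet> y)"
      unfolding y_def by (simp add: inner_diff_left inner_diff_right inner_commute \<mu>_def algebra_simps)
    have "(e + t *\<^sub>R y) \<bullet> (H *v (e + t *\<^sub>R y)) = e \<bullet> (H *v e) + 2 * t * (y \<bullet> (H *v e)) + t^2 * (y \<bullet> (H *v y))"
      using s1 by (simp add: matrix_vector_right_distrib matrix_vector_mult_scaleR inner_add_left inner_add_right
          inner_commute power2_eq_square algebra_simps)
    moreover have "(e + t *\<^sub>R y) \<bullet> (e + t *\<^sub>R y) = 1 + 2 * t * (e \<bullet> y) + t^2 * (y \<bullet> y)"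
      using ee by (simp add: inner_add_left inner_add_right inner_commute power2_eq_square algebra_simps)
    ultimately have "e \<bullet> (H *v e) + 2 * t * (y \<bullet> (H *v e)) + t^2 * (y \<bullet> (H *v y))
        \<le> \<mu> * (1 + 2 * t * (e \<bullet> y) + t^2 * (y \<bullet> y))" using b by simp
    then have "2 * t * (y \<bullet> (H *v e) - \<mu> * (e \<bullet> y)) + t^2 * c \<le> 0"
      unfolding c_def \<mu>_def[symmetric] by (simp add: algebra_simps)
    then show ?thesis using s2 by simp
  qed
  have "y \<bullet> y = 0"
  proof (rule ccontr)
    assume "y \<bullet> y \<noteq> 0"
    then have yp: "y \<bullet> y > 0" by (simp add: order_less_le)
    define s where "s = (y \<bullet> y) / (1 - c)"
    have sp: "s > 0" using yp c_le unfolding s_def by simp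
    have "- 2 * (- s) * (y \<bullet> y) + (- s)^2 * c \<le> 0" using key .
    then have "2 * (y \<bullet> y) + s * c \<le> 0" using sp
      by (simp add: power2_eq_square algebra_simps)
         (metis (no_types, lifting) add.commute distrib_left mult_le_0_iff mult.assoc mult.commute not_less sp)
    moreover have "s * c \<ge> - (y \<bullet> y)"
    proof -
      have "s * (1 - c) = y \<bullet> y" using c_le unfolding s_def by simp
      then have "s * c = s - y \<bullet> y" by (simp add: algebra_simps)
      then show ?thesis using sp by simp
    qed
    ultimately show False using yp by simp
  qed
  then have "y = 0" by simp
  then have "H *v e = \<mu> *\<^sub>R e" unfolding y_def by simp
  then show ?thesis using eS ne by blast
qed


lemma spectral_subspace:
  fixes H :: "real^'n^'n"
  assumes symH: "transpose H = H"
  shows "subspace S \<Longrightarrow> (\<And>y. y \<in> S \<Longrightarrow> H *v y \<in> S) \<Longrightarrow>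
    \<exists>B. finite B \<and> B \<subseteq> S \<and> (\<forall>e\<in>B. norm e = 1 \<and> (\<exists>\<mu>. H *v e = \<mu> *\<^sub>R e)) \<and>
        (\<forall>e\<in>B. \<forall>e'\<in>B. e \<noteq> e' \<longrightarrow> e \<bullet> e' = 0) \<and>
        (\<forall>x\<in>S. x = (\<Sum>e\<in>B. (x \<bullet> e) *\<^sub>R e))"
proof (induction "dim S" arbitrary: S rule: less_induct)
  case less
  show ?case
  proof (cases "\<exists>z\<in>S. z \<noteq> 0")
    case False
    then have "\<forall>x\<in>S. x = 0" by blast
    then show ?thesis by (intro exI[of _ "{}"]) auto
  next
    case True
    then obtain z0 where z0: "z0 \<in> S" "z0 \<noteq> 0" by blast
    obtain e \<mu> where eS: "e \<in> S" and ne: "norm e = 1" and he: "H *v e = \<mu> *\<^sub>R e"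
      using eigvec_exists[OF symH less.prems(1) less.prems(2) z0] by blast
    have ee: "e \<bullet> e = 1" using ne by (simp add: norm_eq_1)
    define S' where "S' = {x \<in> S. x \<bullet> e = 0}"
    have subS': "subspace S'"
      using less.prems(1) unfolding S'_def subspace_def
      by (auto simp: inner_add_left)
    have invS': "H *v y \<in> S'" if "y \<in> S'" for y
    proof -
      have "(H *v y) \<bullet> e = y \<bullet> (H *v e)" by (rule sym_mat_inner[OF symH])
      also have "\<dots> = 0" using that he unfolding S'_def by (simp add: inner_commute)
      finally show ?thesis using that less.prems(2) unfolding S'_def by auto
    qed
    have "e \<notin> S'" using ee unfolding S'_def by auto
    then have "S' \<subset> S" using eS unfolding S'_def by blast
    have sp1: "span S' = S'" using subS' by (rule span_eq_iff[THEN iffD2])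
    have sp2: "span S = S" using less.prems(1) by (rule span_eq_iff[THEN iffD2])
    have "span S' \<subset> span S" unfolding sp1 sp2 by fact
    then have "dim S' < dim S" by (rule dim_psubset)
    from less.hyps[OF this subS' invS'] obtain B' where
      fB': "finite B'" and B'S': "B' \<subseteq> S'" and B'e: "\<forall>e\<in>B'. norm e = 1 \<and> (\<exists>\<mu>. H *v e = \<mu> *\<^sub>R e)"
      and B'o: "\<forall>e\<in>B'. \<forall>e'\<in>B'. e \<noteq> e' \<longrightarrow> e \<bullet> e' = 0"
      and B'x: "\<forall>x\<in>S'. x = (\<Sum>e\<in>B'. (x \<bullet> e) *\<^sub>R e)" by blast
    have eB': "e \<notin> B'" using B'S' ee unfolding S'_def by auto
    have orth: "e' \<bullet> e = 0" if "e' \<in> B'" for e' using that B'S' unfolding S'_def by auto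
    show ?thesis
    proof (intro exI[of _ "insert e B'"] conjI)
      show "finite (insert e B')" using fB' by simp
      show "insert e B' \<subseteq> S" using eS B'S' unfolding S'_def by auto
      show "\<forall>f\<in>insert e B'. norm f = 1 \<and> (\<exists>\<mu>. H *v f = \<mu> *\<^sub>R f)" using B'e ne he by auto
      show "\<forall>f\<in>insert e B'. \<forall>f'\<in>insert e B'. f \<noteq> f' \<longrightarrow> f \<bullet> f' = 0"
        using B'o orth by (auto simp: inner_commute)
    next
      show "\<forall>x\<in>S. x = (\<Sum>f\<in>insert e B'. (x \<bullet> f) *\<^sub>R f)"
      proof
      fix x assume xS: "x \<in> S"
      define x' where "x' = x - (x \<bullet> e) *\<^sub>R e"
      have x'S: "x' \<in> S'" unfolding S'_def x'_def
        using xS eS less.prems(1) ee by (simp add: subspace_diff subspace_scale inner_diff_left)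
      have c: "x' \<bullet> f = x \<bullet> f" if "f \<in> B'" for f
        using orth[OF that] unfolding x'_def by (simp add: inner_diff_left inner_commute[of e f])
      have "x = (x \<bullet> e) *\<^sub>R e + x'" unfolding x'_def by simp
      also have "x' = (\<Sum>f\<in>B'. (x \<bullet> f) *\<^sub>R f)"
        using B'x x'S c by (metis (no_types, lifting) sum.cong)
      finally show "x = (\<Sum>f\<in>insert e B'. (x \<bullet> f) *\<^sub>R f)"
        using fB' eB' by simp
    qed
    qed
  qed
qed

lemma spectral:
  fixes H :: "real^'n^'n"
  assumes symH: "transpose H = H"
  shows "\<exists>B. finite B \<and> (\<forall>e\<in>B. norm e = 1 \<and> (\<exists>\<mu>. H *v e = \<mu> *\<^sub>R e)) \<and>
        (\<forall>e\<in>B. \<forall>e'\<in>B. e \<noteq> e' \<longrightarrow> e \<bullet> e' = 0) \<and>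
        (\<forall>x. x = (\<Sum>e\<in>B. (x \<bullet> e) *\<^sub>R e))"
  using spectral_subspace[OF symH, of UNIV] by auto

primrec uvs :: "real \<Rightarrow> real \<Rightarrow> nat \<Rightarrow> real \<times> real" where
  "uvs a b 0 = (0, 1)"
| "uvs a b (Suc t) = ((1 - b) * (fst (uvs a b t) + snd (uvs a b t)),
      snd (uvs a b t) - a * (fst (uvs a b t) + snd (uvs a b t)))"

definition wvs :: "real \<Rightarrow> real \<Rightarrow> nat \<Rightarrow> real" where
  "wvs a b t = fst (uvs a b t) + snd (uvs a b t)"

lemma uvs_inv:
  assumes a: "0 < a" "a \<le> b" "b \<le> 1"
  shows "(snd (uvs a b t))^2 \<le> 1 \<and> a * (wvs a b t)^2 \<le> 1"
proof (cases "a < 1")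
  case True
  define W where "W t = a * (fst (uvs a b t))^2 + (1 - a) * (snd (uvs a b t))^2" for t
  have dec: "W (Suc t) \<le> W t" for t
  proof -
    define u where "u = fst (uvs a b t)"
    define v where "v = snd (uvs a b t)"
    define w where "w = u + v"
    have id: "W t - W (Suc t) = a * (a * w - v)^2 + a * ((1 - a) - (1 - b)^2) * w^2"
      unfolding W_def u_def[symmetric] v_def[symmetric] uvs.simps fst_conv snd_conv
        w_def[symmetric]
      by (simp add: w_def power2_eq_square algebra_simps)
    have "(1 - b) * (1 - b) \<le> (1 - b) * 1" by (rule mult_left_mono) (use a in auto)
    then have "(1 - b)^2 \<le> 1 - b" by (simp add: power2_eq_square)
    then have "(1 - a) - (1 - b)^2 \<ge> 0" using a by simp
    then have "a * ((1 - a) - (1 - b)^2) * w^2 \<ge> 0" using a by simp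
    moreover have "a * (a * w - v)^2 \<ge> 0" using a by simp
    ultimately show ?thesis using id by linarith
  qed
  have W0: "W 0 = 1 - a" by (simp add: W_def)
  have "W t \<le> W 0" 
    by (induction t) (auto intro: order_trans[OF dec])
  then have Wt: "W t \<le> 1 - a" using W0 by simp
  define u where "u = fst (uvs a b t)"
  define v where "v = snd (uvs a b t)"
  have Wuv: "W t = a * u^2 + (1 - a) * v^2" by (simp add: W_def u_def v_def)
  have "(1 - a) * v^2 \<le> 1 - a" using Wt Wuv a
    by (metis add_le_cancel_right le_add_same_cancel2 mult_nonneg_nonneg order_trans zero_le_power2 less_imp_le)
  then have v1: "v^2 \<le> 1" using True by simp
  have "W t - (1 - a) * a * (u + v)^2 = (a * u - (1 - a) * v)^2"
    unfolding Wuv by (simp add: power2_eq_square algebra_simps)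
  then have "(1 - a) * (a * (u + v)^2) \<le> (1 - a) * 1" using Wt
    by (metis add_le_cancel_right diff_add_cancel le_add_same_cancel2 mult.assoc mult_1_right order_trans zero_le_power2)
  then have "a * (u + v)^2 \<le> 1" using True by simp
  then show ?thesis using v1 by (simp add: wvs_def u_def v_def)
next
  case False
  then have a1: "a = 1" "b = 1" using a by auto
  have z: "uvs 1 1 (Suc t) = (0, - fst (uvs 1 1 t))" for t by simp
  have zz: "uvs 1 1 (Suc t) = (0, 0) \<or> t = 0" for t
    by (cases t) (simp_all)
  show ?thesis
  proof (cases t)
    case 0 then show ?thesis using a1 by (simp add: wvs_def)
  next
    case (Suc s)
    show ?thesis
    proof (cases s)
      case 0 then show ?thesis using a1 Suc by (simp add: wvs_def)
    next
      case (Suc r)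
      then show ?thesis using a1 \<open>t = Suc s\<close> zz[of s] by (auto simp: wvs_def)
    qed
  qed
qed

primrec Sg :: "real \<Rightarrow> nat \<Rightarrow> real" where
  "Sg b 0 = 1"
| "Sg b (Suc t) = 1 + (1 - b) * Sg b t"

lemma Sg_props:
  assumes "0 \<le> b" "b \<le> 1"
  shows "0 \<le> Sg b t \<and> b * Sg b t \<le> 1 \<and> Sg b t \<le> real t + 1"
proof (induction t)
  case 0 then show ?case using assms by simp
next
  case (Suc t)
  have "(1 - b) * Sg b t \<ge> 0" using Suc assms by simp
  moreover have "b * (1 + (1 - b) * Sg b t) = b + (1 - b) * (b * Sg b t)" by (simp add: algebra_simps)
  moreover have "(1 - b) * (b * Sg b t) \<le> (1 - b) * 1" using Suc assms by (intro mult_left_mono) auto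
  moreover have "(1 - b) * Sg b t \<le> 1 * Sg b t" using Suc assms by (intro mult_right_mono) auto
  ultimately show ?case using Suc by auto
qed

lemma scalar_bound:
  assumes a: "0 < a" "a \<le> b" "b \<le> 1"
  shows "a * (wvs a b t)^2 \<le> 1" and "b * (wvs a b t)^2 \<le> real t + 1"
proof -
  show "a * (wvs a b t)^2 \<le> 1" using uvs_inv[OF a] by blast
  have wS: "\<bar>wvs a b t\<bar> \<le> Sg b t"
  proof (induction t)
    case 0 then show ?case by (simp add: wvs_def)
  next
    case (Suc t)
    have eq: "wvs a b (Suc t) = (1 - b) * wvs a b t + snd (uvs a b (Suc t))"
      by (simp add: wvs_def)
    have "(snd (uvs a b (Suc t)))^2 \<le> 1" using uvs_inv[OF a] by blast
    then have v1: "\<bar>snd (uvs a b (Suc t))\<bar> \<le> 1" by (simp only: abs_square_le_1)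
    have "\<bar>(1 - b) * wvs a b t\<bar> \<le> (1 - b) * Sg b t"
      using Suc a by (simp add: abs_mult mult_left_mono)
    then show ?case unfolding eq Sg.simps using v1 by linarith
  qed
  have Sp: "0 \<le> Sg b t" "b * Sg b t \<le> 1" "Sg b t \<le> real t + 1" using Sg_props[of b t] a by auto
  have "(wvs a b t)^2 \<le> (Sg b t)^2" using wS by (metis abs_le_square_iff abs_of_nonneg Sp(1))
  then have "b * (wvs a b t)^2 \<le> b * (Sg b t)^2" using a by (intro mult_left_mono) auto
  also have "\<dots> = (b * Sg b t) * Sg b t" by (simp add: power2_eq_square)
  also have "\<dots> \<le> 1 * Sg b t" using Sp by (intro mult_right_mono) auto
  finally show "b * (wvs a b t)^2 \<le> real t + 1" using Sp by simp
qed

lemma bvec_Inl[simp]: "bvec u v $ Inl i = u $ i" by (simp add: bvec_def)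
lemma bvec_Inr[simp]: "bvec u v $ Inr i = v $ i" by (simp add: bvec_def)
lemma block_nth[simp]:
  "block P Q R S $ Inl i $ Inl j = P $ i $ j" "block P Q R S $ Inl i $ Inr j = Q $ i $ j"
  "block P Q R S $ Inr i $ Inl j = R $ i $ j" "block P Q R S $ Inr i $ Inr j = S $ i $ j"
  by (simp_all add: block_def)

lemma block_mult_bvec:
  "block P Q R S *v bvec x y = bvec (P *v x + Q *v y) (R *v x + S *v y)"
proof -
  have "(block P Q R S *v bvec x y) $ k = bvec (P *v x + Q *v y) (R *v x + S *v y) $ k" for k
    by (cases k) (simp_all add: matrix_vector_mult_def sum_UNIV_sum_type)
  then show ?thesis by (simp add: vec_eq_iff)
qed

lemma inner_bvec: "bvec x y \<bullet> bvec x' y' = x \<bullet> x' + y \<bullet> y'"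
  by (simp add: inner_vec_def sum_UNIV_sum_type)

lemma bvec_add: "bvec (x + x') (y + y') = bvec x y + bvec x' y'"
  by (simp add: vec_eq_iff bvec_def split: sum.split)
lemma bvec_scaleR: "bvec (c *\<^sub>R x) (c *\<^sub>R y) = c *\<^sub>R bvec x y"
  by (simp add: vec_eq_iff bvec_def split: sum.split)
lemma bvec_zero: "bvec 0 0 = 0"
  by (simp add: vec_eq_iff bvec_def split: sum.split)
lemma bvec_sum: "finite B \<Longrightarrow> bvec (\<Sum>e\<in>B. f e) (\<Sum>e\<in>B. g e) = (\<Sum>e\<in>B. bvec (f e) (g e))"
  by (induction B rule: finite_induct) (simp_all add: bvec_zero bvec_add)

lemma uminus_mat_vec: "(- X) *v (z::real^'n) = - (X *v z)"
  by (simp add: vec_eq_iff matrix_vector_mult_def sum_negf)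

lemma mat_vec_sum: "finite B \<Longrightarrow> (M::real^'n^'m) *v (\<Sum>e\<in>B. f e) = (\<Sum>e\<in>B. M *v f e)"
  by (induction B rule: finite_induct) (simp_all add: matrix_vector_right_distrib)

lemma orth_inner_sum:
  assumes "finite B" "\<forall>e\<in>B. e \<bullet> e = 1" "\<forall>e\<in>B. \<forall>e'\<in>B. e \<noteq> e' \<longrightarrow> e \<bullet> e' = 0"
  shows "(\<Sum>e\<in>B. f e *\<^sub>R e) \<bullet> (\<Sum>e\<in>B. g e *\<^sub>R (e::'a::real_inner)) = (\<Sum>e\<in>B. f e * g e)"
proof -
  have "(\<Sum>e\<in>B. f e *\<^sub>R e) \<bullet> (\<Sum>e\<in>B. g e *\<^sub>R e) = (\<Sum>e\<in>B. f e * (e \<bullet> (\<Sum>e'\<in>B. g e' *\<^sub>R e')))"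
    unfolding inner_sum_left inner_scaleR_left ..
  also have "\<dots> = (\<Sum>e\<in>B. f e * g e)"
  proof (intro sum.cong refl)
    fix e assume eB: "e \<in> B"
    have "e \<bullet> (\<Sum>e'\<in>B. g e' *\<^sub>R e') = (\<Sum>e'\<in>B. g e' * (e \<bullet> e'))"
      unfolding inner_sum_right inner_scaleR_right ..
    also have "\<dots> = (\<Sum>e'\<in>B. if e = e' then g e else 0)"
      using assms(2,3) eB by (intro sum.cong refl) auto
    also have "\<dots> = g e" using assms(1) eB by (simp add: sum.delta)
    finally show "f e * (e \<bullet> (\<Sum>e'\<in>B. g e' *\<^sub>R e')) = f e * g e" by simp
  qed
  finally show ?thesis .
qed

definition Ablk :: "real \<Rightarrow> real \<Rightarrow> real^'d^'d \<Rightarrow> real^('d+'d)^('d+'d)" where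
  "Ablk \<alpha> \<beta> H = block (mat 1 - \<beta> *\<^sub>R H) (mat 1 - \<beta> *\<^sub>R H) (- (\<alpha> *\<^sub>R H)) (mat 1 - \<alpha> *\<^sub>R H)"

lemma A_eig:
  assumes he: "H *v e = \<mu> *\<^sub>R e"
  shows "mpow (Ablk \<alpha> \<beta> H) t *v bvec 0 e =
    bvec (fst (uvs (\<alpha> * \<mu>) (\<beta> * \<mu>) t) *\<^sub>R e) (snd (uvs (\<alpha> * \<mu>) (\<beta> * \<mu>) t) *\<^sub>R e)"
proof (induction t)
  case 0 then show ?case by simp
next
  case (Suc t)
  define u where "u = fst (uvs (\<alpha> * \<mu>) (\<beta> * \<mu>) t)"
  define v where "v = snd (uvs (\<alpha> * \<mu>) (\<beta> * \<mu>) t)"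
  have "mpow (Ablk \<alpha> \<beta> H) (Suc t) *v bvec 0 e = Ablk \<alpha> \<beta> H *v (mpow (Ablk \<alpha> \<beta> H) t *v bvec 0 e)"
    by (simp add: matrix_vector_mul_assoc)
  also have "\<dots> = Ablk \<alpha> \<beta> H *v bvec (u *\<^sub>R e) (v *\<^sub>R e)" using Suc by (simp add: u_def v_def)
  also have "\<dots> = bvec (((1 - \<beta> * \<mu>) * (u + v)) *\<^sub>R e) ((v - \<alpha> * \<mu> * (u + v)) *\<^sub>R e)"
    unfolding Ablk_def block_mult_bvec
    by (simp add: matrix_vector_mult_diff_rdistrib uminus_mat_vec matrix_vector_mult_scaleR
        scaleR_matrix_vector_assoc[symmetric] he algebra_simps)
  also have "\<dots> = bvec (fst (uvs (\<alpha> * \<mu>) (\<beta> * \<mu>) (Suc t)) *\<^sub>R e) (snd (uvs (\<alpha> * \<mu>) (\<beta> * \<mu>) (Suc t)) *\<^sub>R e)"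
    by (simp add: u_def v_def mult.assoc)
  finally show ?case .
qed

lemma Ups_quad: "bvec p q \<bullet> (block H H H H *v bvec p q) = (p + q) \<bullet> (H *v (p + q))"
  by (simp add: block_mult_bvec inner_bvec matrix_vector_right_distrib inner_add_left inner_add_right)


lemma det_bound:
  fixes H :: "real^'d^'d"
  assumes symH: "transpose H = H"
    and eig: "\<And>e \<mu>. e \<noteq> 0 \<Longrightarrow> H *v e = \<mu> *\<^sub>R e \<Longrightarrow> 0 < \<mu> \<and> \<mu> \<le> L"
    and st: "0 < \<alpha>" "\<alpha> \<le> \<beta>" "\<beta> \<le> 1 / L"
  shows "(mpow (Ablk \<alpha> \<beta> H) T *v bvec 0 x) \<bullet> (block H H H H *v (mpow (Ablk \<alpha> \<beta> H) T *v bvec 0 x))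
     \<le> min (1 / \<alpha>) (8 * (real T + 1) / \<beta>) * (norm x)^2"
proof -
  obtain B where fB: "finite B" and Be: "\<forall>e\<in>B. norm e = 1 \<and> (\<exists>\<mu>. H *v e = \<mu> *\<^sub>R e)"
    and Bo: "\<forall>e\<in>B. \<forall>e'\<in>B. e \<noteq> e' \<longrightarrow> e \<bullet> e' = 0"
    and Bx: "\<forall>x. x = (\<Sum>e\<in>B. (x \<bullet> e) *\<^sub>R e)"
    using spectral[OF symH] by blast
  define mu where "mu e = (SOME \<mu>. H *v e = \<mu> *\<^sub>R e)" for e
  have hmu: "H *v e = mu e *\<^sub>R e" if "e \<in> B" for e
    using Be that unfolding mu_def by (metis (mono_tags, lifting) someI_ex)
  have e1: "e \<bullet> e = 1" if "e \<in> B" for e using Be that by (simp add: norm_eq_1)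
  have mupos: "0 < mu e \<and> mu e \<le> L" if "e \<in> B" for e
  proof -
    have "e \<noteq> 0" using e1[OF that] by auto
    then show ?thesis using eig hmu[OF that] by blast
  qed
  define K where "K = min (1 / \<alpha>) (8 * (real T + 1) / \<beta>)"
  define c where "c e = x \<bullet> e" for e
  define ue where "ue e = fst (uvs (\<alpha> * mu e) (\<beta> * mu e) T)" for e
  define ve where "ve e = snd (uvs (\<alpha> * mu e) (\<beta> * mu e) T)" for e
  define we where "we e = wvs (\<alpha> * mu e) (\<beta> * mu e) T" for e
  have we_eq: "we e = ue e + ve e" for e by (simp add: we_def ue_def ve_def wvs_def)
  have sb: "mu e * (we e)^2 \<le> K" if eB: "e \<in> B" for e
  proof -
    have m: "0 < mu e" "mu e \<le> L" using mupos[OF eB] by auto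
    have Lp: "L > 0" using m by simp
    have "\<beta> * mu e \<le> \<beta> * L" using m st by (intro mult_left_mono) auto
    also have "\<beta> * L \<le> 1" using st Lp by (simp add: le_divide_eq)
    finally have b1: "\<beta> * mu e \<le> 1" .
    have a0: "0 < \<alpha> * mu e" using st m by simp
    have ab: "\<alpha> * mu e \<le> \<beta> * mu e" using st m by (intro mult_right_mono) auto
    note sc = scalar_bound[OF a0 ab b1, of T, folded we_def]
    have "mu e * (we e)^2 \<le> 1 / \<alpha>" using sc(1) st by (simp add: le_divide_eq mult_ac)
    moreover have "mu e * (we e)^2 \<le> (real T + 1) / \<beta>" using sc(2) st by (simp add: le_divide_eq mult_ac)
    moreover have "(real T + 1) / \<beta> \<le> 8 * (real T + 1) / \<beta>" using st by (simp add: divide_right_mono)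
    ultimately show ?thesis unfolding K_def by simp
  qed
  have x_exp: "x = (\<Sum>e\<in>B. c e *\<^sub>R e)" using Bx unfolding c_def by blast
  have "bvec 0 x = bvec (\<Sum>e\<in>B. c e *\<^sub>R 0) (\<Sum>e\<in>B. c e *\<^sub>R e)" using x_exp by simp
  also have "\<dots> = (\<Sum>e\<in>B. bvec (c e *\<^sub>R 0) (c e *\<^sub>R e))" by (rule bvec_sum[OF fB])
  also have "\<dots> = (\<Sum>e\<in>B. c e *\<^sub>R bvec 0 e)" by (simp only: bvec_scaleR)
  finally have b0: "bvec 0 x = (\<Sum>e\<in>B. c e *\<^sub>R bvec 0 e)" .
  have "mpow (Ablk \<alpha> \<beta> H) T *v bvec 0 x = (\<Sum>e\<in>B. c e *\<^sub>R (mpow (Ablk \<alpha> \<beta> H) T *v bvec 0 e))"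
    unfolding b0 using fB by (simp add: mat_vec_sum matrix_vector_mult_scaleR)
  also have "\<dots> = (\<Sum>e\<in>B. c e *\<^sub>R bvec (ue e *\<^sub>R e) (ve e *\<^sub>R e))"
    using A_eig[OF hmu] unfolding ue_def ve_def by (intro sum.cong refl) auto
  also have "\<dots> = bvec (\<Sum>e\<in>B. (c e * ue e) *\<^sub>R e) (\<Sum>e\<in>B. (c e * ve e) *\<^sub>R e)"
    using fB by (simp add: bvec_sum bvec_scaleR[symmetric])
  finally have th: "mpow (Ablk \<alpha> \<beta> H) T *v bvec 0 x = bvec (\<Sum>e\<in>B. (c e * ue e) *\<^sub>R e) (\<Sum>e\<in>B. (c e * ve e) *\<^sub>R e)" .
  define z where "z = (\<Sum>e\<in>B. (c e * we e) *\<^sub>R e)"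
  have zeq: "(\<Sum>e\<in>B. (c e * ue e) *\<^sub>R e) + (\<Sum>e\<in>B. (c e * ve e) *\<^sub>R e) = z"
    unfolding z_def we_eq by (simp add: sum.distrib[symmetric] scaleR_add_left distrib_left)
  have Hz: "H *v z = (\<Sum>e\<in>B. (c e * we e * mu e) *\<^sub>R e)"
    unfolding z_def using fB hmu by (simp add: mat_vec_sum matrix_vector_mult_scaleR)
  have "(mpow (Ablk \<alpha> \<beta> H) T *v bvec 0 x) \<bullet> (block H H H H *v (mpow (Ablk \<alpha> \<beta> H) T *v bvec 0 x))
      = z \<bullet> (H *v z)" unfolding th Ups_quad zeq ..
  also have "\<dots> = (\<Sum>e\<in>B. (c e * we e) * (c e * we e * mu e))"
    using fB e1 Bo by (subst Hz, unfold z_def, intro orth_inner_sum) auto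
  also have "\<dots> \<le> (\<Sum>e\<in>B. (c e)^2 * K)"
  proof (intro sum_mono)
    fix e assume "e \<in> B"
    have "(c e * we e) * (c e * we e * mu e) = (c e)^2 * (mu e * (we e)^2)"
      by (simp add: power2_eq_square mult_ac)
    also have "\<dots> \<le> (c e)^2 * K" using sb[OF \<open>e \<in> B\<close>] by (intro mult_left_mono) auto
    finally show "(c e * we e) * (c e * we e * mu e) \<le> (c e)^2 * K" .
  qed
  also have "\<dots> = K * (\<Sum>e\<in>B. c e * c e)" by (simp add: sum_distrib_left power2_eq_square mult_ac)
  also have "(\<Sum>e\<in>B. c e * c e) = x \<bullet> x"
    using orth_inner_sum[OF fB, of c c] e1 Bo x_exp by simp
  finally show ?thesis unfolding K_def by (simp add: power2_norm_eq_inner)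
qed

lemma integrable_vec:
  fixes f :: "'a \<Rightarrow> 'b::euclidean_space^'n"
  assumes meas: "f \<in> borel_measurable M" and comp: "\<And>i. integrable M (\<lambda>x. f x $ i)"
  shows "integrable M f"
proof (rule Bochner_Integration.integrable_bound[OF _ meas])
  show "integrable M (\<lambda>x. \<Sum>i\<in>UNIV. norm (f x $ i))"
    by (intro Bochner_Integration.integrable_sum Bochner_Integration.integrable_norm comp)
  show "AE x in M. norm (f x) \<le> norm (\<Sum>i\<in>UNIV. norm (f x $ i))"
  proof (intro AE_I2)
    fix x
    have "norm (f x) \<le> (\<Sum>i\<in>UNIV. norm (f x $ i))"
      unfolding norm_vec_def by (rule L2_set_le_sum) auto
    also have "\<dots> \<le> norm (\<Sum>i\<in>UNIV. norm (f x $ i))" by simp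
    finally show "norm (f x) \<le> norm (\<Sum>i\<in>UNIV. norm (f x $ i))" .
  qed
qed

lemma integral_vec_nth:
  fixes f :: "'a \<Rightarrow> 'b::euclidean_space^'n"
  assumes "integrable M f"
  shows "(integral\<^sup>L M f) $ i = (\<integral>x. f x $ i \<partial>M)"
  using integral_bounded_linear[OF bounded_linear_vec_nth assms, of i] by simp

lemma integral_mat_nth:
  fixes f :: "'a \<Rightarrow> real^'n^'m"
  assumes "integrable M f"
  shows "(integral\<^sup>L M f) $ i $ j = (\<integral>x. f x $ i $ j \<partial>M)"
proof -
  have "integrable M (\<lambda>x. f x $ i)" by (rule integrable_bounded_linear[OF bounded_linear_vec_nth assms])
  then show ?thesis using integral_vec_nth[OF assms] integral_vec_nth by metis
qed

lemma integrable_mat_nth: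
  fixes f :: "'a \<Rightarrow> real^'n^'m"
  assumes "integrable M f"
  shows "integrable M (\<lambda>x. f x $ i $ j)"
proof -
  have "integrable M (\<lambda>x. f x $ i)" by (rule integrable_bounded_linear[OF bounded_linear_vec_nth assms])
  then show ?thesis by (rule integrable_bounded_linear[OF bounded_linear_vec_nth])
qed

lemma outer_mult_vec: "outer a a *v w = (a \<bullet> w) *\<^sub>R (a::real^'n)"
  by (simp add: vec_eq_iff outer_def matrix_vector_mult_def inner_vec_def sum_distrib_left mult_ac)

lemma inner_outer: "w \<bullet> (outer a a *v v) = (a \<bullet> w) * (a \<bullet> (v::real^'n))"
  by (simp add: outer_mult_vec inner_commute)

definition idx :: "'d + 'd \<Rightarrow> 'd" where "idx i = (case i of Inl k \<Rightarrow> k | Inr k \<Rightarrow> k)"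
definition gam :: "real \<Rightarrow> real \<Rightarrow> 'd + 'd \<Rightarrow> real" where
  "gam \<alpha> \<beta> i = (case i of Inl k \<Rightarrow> \<beta> | Inr k \<Rightarrow> \<alpha>)"
definition Dm :: "'d + 'd \<Rightarrow> 'd + 'd \<Rightarrow> real" where
  "Dm i j = (case i of Inl k \<Rightarrow> (if idx j = k then 1 else 0)
                     | Inr k \<Rightarrow> (case j of Inl l \<Rightarrow> 0 | Inr l \<Rightarrow> (if l = k then 1 else 0)))"

lemma Jmat_entry: "Jmat \<alpha> \<beta> a $ i $ j = Dm i j - gam \<alpha> \<beta> i * (a $ idx i * a $ idx j)"
  by (cases i; cases j) (simp_all add: Jmat_def idx_def gam_def Dm_def outer_def mat_def)

lemma Jmat_mult_bvec:
  "Jmat \<alpha> \<beta> a *v bvec p q = bvec ((p + q) - (\<beta> * (a \<bullet> (p + q))) *\<^sub>R a) (q - (\<alpha> * (a \<bullet> (p + q))) *\<^sub>R a)"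
  unfolding Jmat_def block_mult_bvec
  by (simp add: matrix_vector_mult_diff_rdistrib uminus_mat_vec scaleR_matrix_vector_assoc[symmetric]
      outer_mult_vec algebra_simps inner_add_right)

lemma Ablk_mult_bvec:
  "Ablk \<alpha> \<beta> H *v bvec p q = bvec ((p + q) - \<beta> *\<^sub>R (H *v (p + q))) (q - \<alpha> *\<^sub>R (H *v (p + q)))"
  unfolding Ablk_def block_mult_bvec
  by (simp add: matrix_vector_mult_diff_rdistrib uminus_mat_vec scaleR_matrix_vector_assoc[symmetric]
      algebra_simps matrix_vector_right_distrib)

definition lpart :: "real^('d+'d) \<Rightarrow> real^'d" where "lpart x = (\<chi> i. x $ Inl i)"
definition rpart :: "real^('d+'d) \<Rightarrow> real^'d" where "rpart x = (\<chi> i. x $ Inr i)"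

lemma bvec_parts: "bvec (lpart x) (rpart x) = x"
  by (simp add: vec_eq_iff lpart_def rpart_def bvec_def split: sum.split)

lemma continuous_Jmat_entry: "continuous_on UNIV (\<lambda>a. Jmat \<alpha> \<beta> a $ i $ j)"
  unfolding Jmat_entry by (intro continuous_intros)

lemma integral_double_sum:
  fixes f :: "'k::finite \<Rightarrow> 'l::finite \<Rightarrow> 'a \<Rightarrow> real"
  assumes "\<And>k l. integrable M (f k l)"
  shows "(\<integral>x. (\<Sum>k\<in>UNIV. \<Sum>l\<in>UNIV. c k l * f k l x) \<partial>M) = (\<Sum>k\<in>UNIV. \<Sum>l\<in>UNIV. c k l * (\<integral>x. f k l x \<partial>M))"
    and "integrable M (\<lambda>x. \<Sum>k\<in>UNIV. \<Sum>l\<in>UNIV. c k l * f k l x)"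
proof -
  have i1: "integrable M (\<lambda>x. c k l * f k l x)" for k l using assms by simp
  have i2: "integrable M (\<lambda>x. \<Sum>l\<in>UNIV. c k l * f k l x)" for k
    using i1 by (rule Bochner_Integration.integrable_sum)
  show "integrable M (\<lambda>x. \<Sum>k\<in>UNIV. \<Sum>l\<in>UNIV. c k l * f k l x)"
    using i2 by (rule Bochner_Integration.integrable_sum)
  have "(\<integral>x. (\<Sum>k\<in>UNIV. \<Sum>l\<in>UNIV. c k l * f k l x) \<partial>M) = (\<Sum>k\<in>UNIV. \<integral>x. (\<Sum>l\<in>UNIV. c k l * f k l x) \<partial>M)"
    using i2 by (rule Bochner_Integration.integral_sum)
  also have "\<dots> = (\<Sum>k\<in>UNIV. \<Sum>l\<in>UNIV. \<integral>x. c k l * f k l x \<partial>M)"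
    using i1 by (intro sum.cong refl Bochner_Integration.integral_sum)
  also have "\<dots> = (\<Sum>k\<in>UNIV. \<Sum>l\<in>UNIV. c k l * (\<integral>x. f k l x \<partial>M))"
    by simp
  finally show "(\<integral>x. (\<Sum>k\<in>UNIV. \<Sum>l\<in>UNIV. c k l * f k l x) \<partial>M) = (\<Sum>k\<in>UNIV. \<Sum>l\<in>UNIV. c k l * (\<integral>x. f k l x \<partial>M))" .
qed

locale rho_setup =
  fixes \<rho> :: "((real^'d) \<times> real) measure" and H :: "real^'d^'d" and \<kappa> :: real
  assumes prob: "prob_space \<rho>"
    and sets_rho: "sets \<rho> = sets borel"
    and mom_a: "integrable \<rho> (\<lambda>(a, b). (norm a)\<^sup>2)"
    and H_def: "H = (\<integral>z. outer (fst z) (fst z) \<partial>\<rho>)"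
    and kappa: "\<And>M::real^'d^'d. psd M \<Longrightarrow>
         integrable \<rho> (\<lambda>z. (fst z \<bullet> (M *v fst z)) *\<^sub>R outer (fst z) (fst z)) \<and>
         loewner_le (\<integral>z. (fst z \<bullet> (M *v fst z)) *\<^sub>R outer (fst z) (fst z) \<partial>\<rho>)
                    ((\<kappa> * mtrace (M ** H)) *\<^sub>R H)"
begin

sublocale R: prob_space \<rho> by (rule prob)

lemma meas_rho: "continuous_on UNIV f \<Longrightarrow> f \<in> borel_measurable \<rho>"
  using borel_measurable_continuous_onI measurable_cong_sets[OF sets_rho refl] by blast

lemma int_n2: "integrable \<rho> (\<lambda>z. (norm (fst z))\<^sup>2)"
proof -
  have eq: "(\<lambda>z. (norm (fst z))\<^sup>2) = (\<lambda>(a::real^'d, b::real). (norm a)\<^sup>2)"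
    by (rule ext) (simp add: case_prod_beta)
  show ?thesis unfolding eq by (rule mom_a)
qed

lemma psd_one: "psd (mat 1 :: real^'d^'d)"
  unfolding psd_def by simp

lemma int_n4: "integrable \<rho> (\<lambda>z. (norm (fst z))^4)"
proof -
  let ?G = "\<lambda>z. (fst z \<bullet> (mat 1 *v fst z)) *\<^sub>R outer (fst z) (fst z)"
  have iG: "integrable \<rho> ?G" using kappa[OF psd_one] by blast
  have int: "integrable \<rho> (\<lambda>z. \<Sum>i\<in>UNIV. ?G z $ i $ i)"
    using integrable_mat_nth[OF iG] by (intro Bochner_Integration.integrable_sum) auto
  have eqz: "(\<Sum>i\<in>UNIV. ?G z $ i $ i) = (norm (fst z))^4" for z
  proof -
    have "(\<Sum>i\<in>UNIV. ?G z $ i $ i) = (fst z \<bullet> fst z) * (\<Sum>i\<in>UNIV. fst z $ i * fst z $ i)"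
      by (simp add: outer_def sum_distrib_left)
    also have "\<dots> = (fst z \<bullet> fst z) * (fst z \<bullet> fst z)" by (simp add: inner_vec_def)
    also have "\<dots> = (norm (fst z))^4" by (simp add: power2_norm_eq_inner[symmetric] power4_eq_xxxx power2_eq_square)
    finally show ?thesis .
  qed
  have eqf: "(\<lambda>z. \<Sum>i\<in>UNIV. ?G z $ i $ i) = (\<lambda>z. (norm (fst z))^4)"
    by (rule ext) (rule eqz)
  show ?thesis unfolding eqf[symmetric] by (rule int)
qed

lemma int_quad: "integrable \<rho> (\<lambda>z. fst z $ i * fst z $ j)"
proof (rule Bochner_Integration.integrable_bound[OF int_n2])
  show "(\<lambda>z. fst z $ i * fst z $ j) \<in> borel_measurable \<rho>"
    by (intro meas_rho continuous_intros)
  show "AE z in \<rho>. norm (fst z $ i * fst z $ j) \<le> norm ((norm (fst z))\<^sup>2)"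
  proof (intro AE_I2)
    fix z :: "(real^'d) \<times> real"
    have "\<bar>fst z $ i\<bar> * \<bar>fst z $ j\<bar> \<le> norm (fst z) * norm (fst z)"
      by (intro mult_mono component_le_norm_cart) auto
    then show "norm (fst z $ i * fst z $ j) \<le> norm ((norm (fst z))\<^sup>2)"
      by (simp add: abs_mult power2_eq_square)
  qed
qed

lemma int_quart: "integrable \<rho> (\<lambda>z. fst z $ i * fst z $ j * fst z $ k * fst z $ l)"
proof (rule Bochner_Integration.integrable_bound[OF int_n4])
  show "(\<lambda>z. fst z $ i * fst z $ j * fst z $ k * fst z $ l) \<in> borel_measurable \<rho>"
    by (intro meas_rho continuous_intros)
  show "AE z in \<rho>. norm (fst z $ i * fst z $ j * fst z $ k * fst z $ l) \<le> norm ((norm (fst z))^4)"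
  proof (intro AE_I2)
    fix z :: "(real^'d) \<times> real"
    have "\<bar>fst z $ i\<bar> * \<bar>fst z $ j\<bar> * \<bar>fst z $ k\<bar> * \<bar>fst z $ l\<bar> \<le> norm (fst z) * norm (fst z) * norm (fst z) * norm (fst z)"
      by (intro mult_mono component_le_norm_cart) auto
    then show "norm (fst z $ i * fst z $ j * fst z $ k * fst z $ l) \<le> norm ((norm (fst z))^4)"
      by (simp add: abs_mult power4_eq_xxxx)
  qed
qed

lemma int_outer: "integrable \<rho> (\<lambda>z. outer (fst z) (fst z))"
proof (rule integrable_vec)
  show "(\<lambda>z. outer (fst z) (fst z)) \<in> borel_measurable \<rho>"
    unfolding outer_def by (intro meas_rho continuous_intros)
  fix i
  show "integrable \<rho> (\<lambda>z. outer (fst z) (fst z) $ i)"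
  proof (rule integrable_vec)
    show "(\<lambda>z. outer (fst z) (fst z) $ i) \<in> borel_measurable \<rho>"
      unfolding outer_def by (intro meas_rho continuous_intros)
    fix j show "integrable \<rho> (\<lambda>z. outer (fst z) (fst z) $ i $ j)"
      unfolding outer_def using int_quad by simp
  qed
qed

lemma H_nth: "H $ i $ j = (\<integral>z. fst z $ i * fst z $ j \<partial>\<rho>)"
  unfolding H_def integral_mat_nth[OF int_outer] by (simp add: outer_def)

lemma H_sym: "transpose H = H"
  by (simp add: vec_eq_iff transpose_def H_nth mult.commute)

lemma quad_expand: "(a \<bullet> w) * (a \<bullet> v) = (\<Sum>k\<in>UNIV. \<Sum>l\<in>UNIV. (w $ k * v $ l) * (a $ k * a $ l))"
  for a w v :: "real^'d"
  unfolding inner_vec_def sum_product by (simp add: mult_ac)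

lemma F1: "(\<integral>z. (fst z \<bullet> w) * (fst z \<bullet> v) \<partial>\<rho>) = w \<bullet> (H *v v)"
proof -
  have eq: "(fst z \<bullet> w) * (fst z \<bullet> v) = (\<Sum>k\<in>UNIV. \<Sum>l\<in>UNIV. (w $ k * v $ l) * (fst z $ k * fst z $ l))" for z
    by (rule quad_expand)
  have "(\<integral>z. (fst z \<bullet> w) * (fst z \<bullet> v) \<partial>\<rho>) = (\<Sum>k\<in>UNIV. \<Sum>l\<in>UNIV. (w $ k * v $ l) * H $ k $ l)"
    unfolding eq H_nth
    by (rule integral_double_sum(1)[where f="\<lambda>k l z. fst z $ k * fst z $ l"]) (rule int_quad)
  also have "\<dots> = w \<bullet> (H *v v)"
    by (simp add: inner_vec_def matrix_vector_mult_def sum_distrib_left mult_ac)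
  finally show ?thesis .
qed

lemma int_F1: "integrable \<rho> (\<lambda>z. (fst z \<bullet> w) * (fst z \<bullet> v))"
proof -
  show ?thesis unfolding quad_expand by (simp add: int_quad)
qed

lemma H_psd: "0 \<le> v \<bullet> (H *v v)"
proof -
  have "v \<bullet> (H *v v) = (\<integral>z. (fst z \<bullet> v) * (fst z \<bullet> v) \<partial>\<rho>)" by (rule F1[symmetric])
  also have "\<dots> \<ge> 0" by (rule Bochner_Integration.integral_nonneg) simp
  finally show ?thesis .
qed

lemma F2:
  assumes Y: "psd Y"
  shows "integrable \<rho> (\<lambda>z. (fst z \<bullet> (Y *v fst z)) * (fst z \<bullet> w)^2)"
    and "(\<integral>z. (fst z \<bullet> (Y *v fst z)) * (fst z \<bullet> w)^2 \<partial>\<rho>) \<le> \<kappa> * mtrace (Y ** H) * (w \<bullet> (H *v w))"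
proof -
  let ?G = "\<lambda>z. (fst z \<bullet> (Y *v fst z)) *\<^sub>R outer (fst z) (fst z)"
  define K where "K = (\<integral>z. ?G z \<partial>\<rho>)"
  have iG: "integrable \<rho> ?G" and le: "loewner_le K ((\<kappa> * mtrace (Y ** H)) *\<^sub>R H)"
    using kappa[OF Y] unfolding K_def by blast+
  have eq: "(fst z \<bullet> (Y *v fst z)) * (fst z \<bullet> w)^2 = (\<Sum>k\<in>UNIV. \<Sum>l\<in>UNIV. (w $ k * w $ l) * ?G z $ k $ l)" for z
    by (simp add: outer_def inner_vec_def power2_eq_square sum_product sum_distrib_left mult_ac)
  have iGc: "integrable \<rho> (\<lambda>z. ?G z $ k $ l)" for k l by (rule integrable_mat_nth[OF iG])
  show int: "integrable \<rho> (\<lambda>z. (fst z \<bullet> (Y *v fst z)) * (fst z \<bullet> w)^2)"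
    unfolding eq by (rule integral_double_sum(2)[where f="\<lambda>k l z. ?G z $ k $ l"]) (rule iGc)
  have "(\<integral>z. (fst z \<bullet> (Y *v fst z)) * (fst z \<bullet> w)^2 \<partial>\<rho>) = (\<Sum>k\<in>UNIV. \<Sum>l\<in>UNIV. (w $ k * w $ l) * K $ k $ l)"
    unfolding eq K_def integral_mat_nth[OF iG]
    by (rule integral_double_sum(1)[where f="\<lambda>k l z. ?G z $ k $ l"]) (rule iGc)
  also have "\<dots> = w \<bullet> (K *v w)" by (simp add: quad_sum mult_ac)
  also have "\<dots> \<le> w \<bullet> (((\<kappa> * mtrace (Y ** H)) *\<^sub>R H) *v w)"
  proof -
    have "0 \<le> w \<bullet> ((((\<kappa> * mtrace (Y ** H)) *\<^sub>R H) - K) *v w)"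
      using le unfolding loewner_le_def psd_def by blast
    then show ?thesis by (simp add: matrix_vector_mult_diff_rdistrib inner_diff_right)
  qed
  also have "\<dots> = \<kappa> * mtrace (Y ** H) * (w \<bullet> (H *v w))"
    by (simp add: scaleR_matrix_vector_assoc[symmetric])
  finally show "(\<integral>z. (fst z \<bullet> (Y *v fst z)) * (fst z \<bullet> w)^2 \<partial>\<rho>) \<le> \<kappa> * mtrace (Y ** H) * (w \<bullet> (H *v w))" .
qed

end

definition Ymat :: "real \<Rightarrow> real \<Rightarrow> real^('d+'d)^('d+'d) \<Rightarrow> real^'d^'d" where
  "Ymat \<alpha> \<beta> B = (\<chi> k l. \<beta>\<^sup>2 * B $ Inl k $ Inl l + (\<alpha> * \<beta>) * B $ Inl k $ Inr l
      + (\<alpha> * \<beta>) * B $ Inr k $ Inl l + \<alpha>\<^sup>2 * B $ Inr k $ Inr l)"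

definition Nb :: "real \<Rightarrow> real \<Rightarrow> real^'d^'d \<Rightarrow> real^('d+'d)^('d+'d)" where
  "Nb \<alpha> \<beta> H = block ((\<beta>\<^sup>2) *\<^sub>R H) ((\<alpha> * \<beta>) *\<^sub>R H) ((\<alpha> * \<beta>) *\<^sub>R H) ((\<alpha>\<^sup>2) *\<^sub>R H)"

lemma sum4: "(\<Sum>k\<in>UNIV. \<Sum>l\<in>UNIV. a k l + b k l + c k l + d k l) =
   (\<Sum>k\<in>UNIV. \<Sum>l\<in>UNIV. a k l) + (\<Sum>k\<in>UNIV. \<Sum>l\<in>UNIV. b k l) + (\<Sum>k\<in>UNIV. \<Sum>l\<in>UNIV. c k l) + (\<Sum>k\<in>UNIV. \<Sum>l\<in>UNIV. (d k l::real))"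
  by (simp only: sum.distrib)

lemma Y_quad:
  "bvec (\<beta> *\<^sub>R g) (\<alpha> *\<^sub>R g) \<bullet> (B *v bvec (\<beta> *\<^sub>R g) (\<alpha> *\<^sub>R g)) = g \<bullet> (Ymat \<alpha> \<beta> B *v g)"
proof -
  have "bvec (\<beta> *\<^sub>R g) (\<alpha> *\<^sub>R g) \<bullet> (B *v bvec (\<beta> *\<^sub>R g) (\<alpha> *\<^sub>R g))
     = (\<Sum>k\<in>UNIV. \<Sum>l\<in>UNIV. B $ Inl k $ Inl l * (\<beta> * g $ k * (\<beta> * g $ l)))
     + (\<Sum>k\<in>UNIV. \<Sum>l\<in>UNIV. B $ Inl k $ Inr l * (\<beta> * g $ k * (\<alpha> * g $ l)))
     + ((\<Sum>k\<in>UNIV. \<Sum>l\<in>UNIV. B $ Inr k $ Inl l * (\<alpha> * g $ k * (\<beta> * g $ l)))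
     + (\<Sum>k\<in>UNIV. \<Sum>l\<in>UNIV. B $ Inr k $ Inr l * (\<alpha> * g $ k * (\<alpha> * g $ l))))"
    unfolding quad_sum by (simp add: sum_UNIV_sum_type sum.distrib)
  also have "\<dots> = (\<Sum>k\<in>UNIV. \<Sum>l\<in>UNIV. Ymat \<alpha> \<beta> B $ k $ l * (g $ k * g $ l))"
  proof -
    have e: "Ymat \<alpha> \<beta> B $ k $ l * (g $ k * g $ l) =
       B $ Inl k $ Inl l * (\<beta> * g $ k * (\<beta> * g $ l)) + B $ Inl k $ Inr l * (\<beta> * g $ k * (\<alpha> * g $ l))
       + B $ Inr k $ Inl l * (\<alpha> * g $ k * (\<beta> * g $ l)) + B $ Inr k $ Inr l * (\<alpha> * g $ k * (\<alpha> * g $ l))" for k l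
      unfolding Ymat_def vec_lambda_beta power2_eq_square by (simp add: algebra_simps)
    show ?thesis unfolding e sum4 by (simp only: add_ac)
  qed
  also have "\<dots> = g \<bullet> (Ymat \<alpha> \<beta> B *v g)" unfolding quad_sum ..
  finally show ?thesis .
qed

lemma tr_Y:
  assumes "transpose H = H"
  shows "tr_inner B (Nb \<alpha> \<beta> H) = mtrace (Ymat \<alpha> \<beta> B ** H)"
proof -
  have Hs: "H $ l $ k = H $ k $ l" for k l using arg_cong[OF assms, of "\<lambda>X. X $ k $ l"] by (simp add: transpose_def)
  have "tr_inner B (Nb \<alpha> \<beta> H) = (\<Sum>k\<in>UNIV. \<Sum>l\<in>UNIV. B $ Inl k $ Inl l * (\<beta>\<^sup>2 * H $ k $ l))
     + (\<Sum>k\<in>UNIV. \<Sum>l\<in>UNIV. B $ Inl k $ Inr l * ((\<alpha> * \<beta>) * H $ k $ l))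
     + ((\<Sum>k\<in>UNIV. \<Sum>l\<in>UNIV. B $ Inr k $ Inl l * ((\<alpha> * \<beta>) * H $ k $ l))
     + (\<Sum>k\<in>UNIV. \<Sum>l\<in>UNIV. B $ Inr k $ Inr l * (\<alpha>\<^sup>2 * H $ k $ l)))"
    unfolding tr_inner_sum Nb_def by (simp add: sum_UNIV_sum_type sum.distrib)
  also have "\<dots> = (\<Sum>k\<in>UNIV. \<Sum>l\<in>UNIV. Ymat \<alpha> \<beta> B $ k $ l * H $ k $ l)"
  proof -
    have e: "Ymat \<alpha> \<beta> B $ k $ l * H $ k $ l =
       B $ Inl k $ Inl l * (\<beta>\<^sup>2 * H $ k $ l) + B $ Inl k $ Inr l * ((\<alpha> * \<beta>) * H $ k $ l)
       + B $ Inr k $ Inl l * ((\<alpha> * \<beta>) * H $ k $ l) + B $ Inr k $ Inr l * (\<alpha>\<^sup>2 * H $ k $ l)" for k l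
      unfolding Ymat_def vec_lambda_beta by (simp add: algebra_simps)
    show ?thesis unfolding e sum4 by (simp only: add_ac)
  qed
  also have "\<dots> = mtrace (Ymat \<alpha> \<beta> B ** H)"
    unfolding mtrace_def matrix_matrix_mult_def vec_lambda_beta by (simp only: Hs)
  finally show ?thesis .
qed

lemma Y_sym:
  assumes "transpose B = B"
  shows "transpose (Ymat \<alpha> \<beta> B) = Ymat \<alpha> \<beta> B"
proof -
  have Bs: "B $ j $ i = B $ i $ j" for i j using arg_cong[OF assms, of "\<lambda>X. X $ i $ j"] by (simp add: transpose_def)
  have "(transpose (Ymat \<alpha> \<beta> B)) $ k $ l = Ymat \<alpha> \<beta> B $ k $ l" for k l
  proof -
    have e: "B$Inl l$Inl k = B$Inl k$Inl l" "B$Inl l$Inr k = B$Inr k$Inl l"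
       "B$Inr l$Inl k = B$Inl k$Inr l" "B$Inr l$Inr k = B$Inr k$Inr l" by (rule Bs)+
    show ?thesis unfolding Ymat_def transpose_def by (simp add: e algebra_simps)
  qed
  then show ?thesis by (simp add: vec_eq_iff)
qed

lemma inner_transpose_mv: "y \<bullet> (transpose M *v z) = (M *v y) \<bullet> (z::real^'n)"
proof -
  have "y \<bullet> (transpose M *v z) = (z v* M) \<bullet> y" by (simp add: inner_commute)
  also have "\<dots> = z \<bullet> (M *v y)" by (rule dot_lmul_matrix)
  finally show ?thesis by (simp add: inner_commute)
qed

lemma quad_congr: "y \<bullet> ((transpose M ** X ** M) *v y) = (M *v y) \<bullet> (X *v (M *v (y::real^'n)))"
proof -
  have "(transpose M ** X ** M) *v y = transpose M *v (X *v (M *v y))"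
    by (simp only: matrix_vector_mul_assoc matrix_mul_assoc)
  then show ?thesis by (simp only: inner_transpose_mv)
qed

lemma bvec_diff: "bvec x y - bvec x' y' = bvec (x - x') (y - y')"
  by (simp add: vec_eq_iff bvec_def split: sum.split)

context rho_setup
begin

lemma Ups_sym: "transpose (block H H H H) = block H H H H"
proof -
  have Hs: "H $ j $ i = H $ i $ j" for i j using arg_cong[OF H_sym, of "\<lambda>X. X $ i $ j"] by (simp add: transpose_def)
  have "(transpose (block H H H H)) $ i $ j = block H H H H $ i $ j" for i j
    by (cases i; cases j) (simp_all add: transpose_def block_def, (rule Hs)+)
  then show ?thesis by (simp add: vec_eq_iff)
qed

lemma B_sym: "transpose (transpose M ** block H H H H ** M) = transpose M ** block H H H H ** M"
  by (simp add: matrix_transpose_mul Ups_sym matrix_mul_assoc)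

lemma Y_psd: "psd (Ymat \<alpha> \<beta> (transpose M ** block H H H H ** M))"
  unfolding psd_def
proof (intro conjI allI)
  show "transpose (Ymat \<alpha> \<beta> (transpose M ** block H H H H ** M)) = Ymat \<alpha> \<beta> (transpose M ** block H H H H ** M)"
    by (rule Y_sym[OF B_sym])
  fix x
  define v where "v = M *v bvec (\<beta> *\<^sub>R x) (\<alpha> *\<^sub>R x)"
  have "x \<bullet> (Ymat \<alpha> \<beta> (transpose M ** block H H H H ** M) *v x)
      = bvec (\<beta> *\<^sub>R x) (\<alpha> *\<^sub>R x) \<bullet> ((transpose M ** block H H H H ** M) *v bvec (\<beta> *\<^sub>R x) (\<alpha> *\<^sub>R x))"
    by (rule Y_quad[symmetric])
  also have "\<dots> = v \<bullet> (block H H H H *v v)" unfolding v_def by (rule quad_congr)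
  also have "\<dots> = (lpart v + rpart v) \<bullet> (H *v (lpart v + rpart v))"
    using Ups_quad[of "lpart v" "rpart v" H] by (simp only: bvec_parts)
  also have "\<dots> \<ge> 0" by (rule H_psd)
  finally show "0 \<le> x \<bullet> (Ymat \<alpha> \<beta> (transpose M ** block H H H H ** M) *v x)" .
qed

end

context rho_setup
begin

lemma PW:
  fixes M :: "real^('d+'d)^('d+'d)" and \<theta> :: "real^('d+'d)"
  defines "B \<equiv> transpose M ** block H H H H ** M"
  shows "integrable \<rho> (\<lambda>z. (Jmat \<alpha> \<beta> (fst z) *v \<theta>) \<bullet> (B *v (Jmat \<alpha> \<beta> (fst z) *v \<theta>)))"
    and "(\<integral>z. (Jmat \<alpha> \<beta> (fst z) *v \<theta>) \<bullet> (B *v (Jmat \<alpha> \<beta> (fst z) *v \<theta>)) \<partial>\<rho>)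
         \<le> \<theta> \<bullet> ((transpose (Ablk \<alpha> \<beta> H) ** B ** Ablk \<alpha> \<beta> H) *v \<theta>)
           + \<kappa> * tr_inner B (Nb \<alpha> \<beta> H) * (\<theta> \<bullet> (block H H H H *v \<theta>))"
proof -
  define p where "p = lpart \<theta>"
  define q where "q = rpart \<theta>"
  define w where "w = p + q"
  have th: "\<theta> = bvec p q" unfolding p_def q_def by (simp add: bvec_parts)
  define A where "A = Ablk \<alpha> \<beta> H"
  define x where "x = A *v \<theta>"
  define h where "h = H *v w"
  define Y where "Y = Ymat \<alpha> \<beta> B"
  define c where "c = \<beta> *\<^sub>R lpart (B *v x) + \<alpha> *\<^sub>R rpart (B *v x)"
  have Bs: "transpose B = B" unfolding B_def by (rule B_sym)
  have Yp: "psd Y" unfolding Y_def B_def by (rule Y_psd)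
  have Ys: "transpose Y = Y" using Yp unfolding psd_def by blast
  define C where "C = x \<bullet> (B *v x) + 2 * (h \<bullet> c) + h \<bullet> (Y *v h)"
  have pt: "(Jmat \<alpha> \<beta> a *v \<theta>) \<bullet> (B *v (Jmat \<alpha> \<beta> a *v \<theta>)) =
      C - 2 * ((a \<bullet> w) * (a \<bullet> c)) + (a \<bullet> (Y *v a)) * (a \<bullet> w)^2 - 2 * ((a \<bullet> w) * (a \<bullet> (Y *v h)))" for a
  proof -
    define g where "g = (a \<bullet> w) *\<^sub>R a - h"
    define y where "y = bvec (\<beta> *\<^sub>R g) (\<alpha> *\<^sub>R g)"
    have s1: "Jmat \<alpha> \<beta> a *v \<theta> = x - y"
      unfolding th x_def A_def y_def g_def h_def w_def Jmat_mult_bvec Ablk_mult_bvec bvec_diff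
      by (simp add: algebra_simps)
    have s2: "(x - y) \<bullet> (B *v (x - y)) = x \<bullet> (B *v x) - 2 * (y \<bullet> (B *v x)) + y \<bullet> (B *v y)"
    proof -
      have "x \<bullet> (B *v y) = (B *v x) \<bullet> y" using sym_mat_inner[OF Bs, of x y] by simp
      then have "x \<bullet> (B *v y) = y \<bullet> (B *v x)" by (simp add: inner_commute)
      then show ?thesis by (simp add: matrix_vector_mult_diff_distrib inner_diff_left inner_diff_right)
    qed
    have s3: "y \<bullet> (B *v x) = g \<bullet> c"
    proof -
      have "y \<bullet> (B *v x) = y \<bullet> bvec (lpart (B *v x)) (rpart (B *v x))" by (simp add: bvec_parts)
      also have "\<dots> = g \<bullet> c" unfolding y_def inner_bvec c_def by (simp add: inner_add_right)
      finally show ?thesis .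
    qed
    have s4: "y \<bullet> (B *v y) = g \<bullet> (Y *v g)" unfolding y_def Y_def by (rule Y_quad)
    have s5: "g \<bullet> c = (a \<bullet> w) * (a \<bullet> c) - h \<bullet> c"
      unfolding g_def by (simp add: inner_diff_left)
    have hYa: "h \<bullet> (Y *v a) = a \<bullet> (Y *v h)"
      using sym_mat_inner[OF Ys, of a h] by (simp add: inner_commute)
    have s6: "g \<bullet> (Y *v g) = (a \<bullet> (Y *v a)) * (a \<bullet> w)^2 - 2 * ((a \<bullet> w) * (a \<bullet> (Y *v h))) + h \<bullet> (Y *v h)"
      unfolding g_def using hYa
      by (simp add: matrix_vector_mult_diff_distrib matrix_vector_mult_scaleR inner_diff_left inner_diff_right
          power2_eq_square algebra_simps)
    show ?thesis unfolding s1 s2 s3 s4 s5 s6 C_def by (simp add: algebra_simps)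
  qed
  have i1: "integrable \<rho> (\<lambda>z. (fst z \<bullet> w) * (fst z \<bullet> c))" by (rule int_F1)
  have i2: "integrable \<rho> (\<lambda>z. (fst z \<bullet> (Y *v fst z)) * (fst z \<bullet> w)^2)" by (rule F2(1)[OF Yp])
  have i3: "integrable \<rho> (\<lambda>z. (fst z \<bullet> w) * (fst z \<bullet> (Y *v h)))" by (rule int_F1)
  show "integrable \<rho> (\<lambda>z. (Jmat \<alpha> \<beta> (fst z) *v \<theta>) \<bullet> (B *v (Jmat \<alpha> \<beta> (fst z) *v \<theta>)))"
    unfolding pt using i1 i2 i3 by simp
  have "(\<integral>z. (Jmat \<alpha> \<beta> (fst z) *v \<theta>) \<bullet> (B *v (Jmat \<alpha> \<beta> (fst z) *v \<theta>)) \<partial>\<rho>)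
      = C - 2 * (\<integral>z. (fst z \<bullet> w) * (fst z \<bullet> c) \<partial>\<rho>) + (\<integral>z. (fst z \<bullet> (Y *v fst z)) * (fst z \<bullet> w)^2 \<partial>\<rho>)
          - 2 * (\<integral>z. (fst z \<bullet> w) * (fst z \<bullet> (Y *v h)) \<partial>\<rho>)"
    unfolding pt using i1 i2 i3 by (simp add: R.prob_space)
  also have "\<dots> = x \<bullet> (B *v x) + (\<integral>z. (fst z \<bullet> (Y *v fst z)) * (fst z \<bullet> w)^2 \<partial>\<rho>) - h \<bullet> (Y *v h)"
  proof -
    have "w \<bullet> (H *v c) = h \<bullet> c" unfolding h_def using sym_mat_inner[OF H_sym, of w c] by simp
    moreover have "w \<bullet> (H *v (Y *v h)) = h \<bullet> (Y *v h)" using sym_mat_inner[OF H_sym, of w "Y *v h"] by (simp add: h_def)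
    ultimately show ?thesis unfolding F1 C_def by simp
  qed
  also have "\<dots> \<le> x \<bullet> (B *v x) + \<kappa> * mtrace (Y ** H) * (w \<bullet> (H *v w))"
  proof -
    have "0 \<le> h \<bullet> (Y *v h)" using Yp unfolding psd_def by blast
    then show ?thesis using F2(2)[OF Yp, of w] by simp
  qed
  also have "\<dots> = \<theta> \<bullet> ((transpose (Ablk \<alpha> \<beta> H) ** B ** Ablk \<alpha> \<beta> H) *v \<theta>)
           + \<kappa> * tr_inner B (Nb \<alpha> \<beta> H) * (\<theta> \<bullet> (block H H H H *v \<theta>))"
  proof -
    have "x \<bullet> (B *v x) = \<theta> \<bullet> ((transpose (Ablk \<alpha> \<beta> H) ** B ** Ablk \<alpha> \<beta> H) *v \<theta>)"
      unfolding x_def A_def by (rule quad_congr[symmetric])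
    moreover have "mtrace (Y ** H) = tr_inner B (Nb \<alpha> \<beta> H)" unfolding Y_def by (rule tr_Y[OF H_sym, symmetric])
    moreover have "w \<bullet> (H *v w) = \<theta> \<bullet> (block H H H H *v \<theta>)" unfolding th w_def by (rule Ups_quad[symmetric])
    ultimately show ?thesis by simp
  qed
  finally show "(\<integral>z. (Jmat \<alpha> \<beta> (fst z) *v \<theta>) \<bullet> (B *v (Jmat \<alpha> \<beta> (fst z) *v \<theta>)) \<partial>\<rho>)
         \<le> \<theta> \<bullet> ((transpose (Ablk \<alpha> \<beta> H) ** B ** Ablk \<alpha> \<beta> H) *v \<theta>)
           + \<kappa> * tr_inner B (Nb \<alpha> \<beta> H) * (\<theta> \<bullet> (block H H H H *v \<theta>))" .
qed

end

lemma bias_local: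
  "(\<And>i. i < t \<Longrightarrow> \<omega> i = \<omega>' i) \<Longrightarrow> bias \<alpha> \<beta> x0 xs \<omega> t = bias \<alpha> \<beta> x0 xs \<omega>' t"
  by (induction t) auto

lemma cont_Jmv: "continuous_on UNIV (\<lambda>x. Jmat \<alpha> \<beta> (fst x) *v snd x)"
  unfolding matrix_vector_mult_def Jmat_entry by (intro continuous_intros)

locale main_setup = rho_setup \<rho> H \<kappa> for \<rho> :: "((real^'d) \<times> real) measure" and H \<kappa> +
  fixes \<alpha> \<beta> :: real and x0 xs :: "real^'d"
begin

abbreviation "P \<equiv> PiM (UNIV::nat set) (\<lambda>_. \<rho>)"
abbreviation "th t \<omega> \<equiv> bias \<alpha> \<beta> x0 xs \<omega> t"

lemma probP: "prob_space P" by (rule prob_space_PiM) (rule prob)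

sublocale Q: prob_space P by (rule probP)

sublocale PP: product_prob_space "\<lambda>_::nat. \<rho>" "UNIV :: nat set"
  by unfold_locales

lemma meas_th: "{..<t} \<subseteq> I \<Longrightarrow> (\<lambda>\<omega>. bias \<alpha> \<beta> x0 xs \<omega> t) \<in> borel_measurable (PiM I (\<lambda>_. \<rho>))"
proof (induction t)
  case 0 then show ?case by simp
next
  case (Suc t)
  have tI: "t \<in> I" using Suc.prems by auto
  have m1: "(\<lambda>\<omega>. \<omega> t) \<in> measurable (PiM I (\<lambda>_. \<rho>)) \<rho>"
    using tI by (rule measurable_component_singleton)
  have m2: "(\<lambda>\<omega>. fst (\<omega> t)) \<in> borel_measurable (PiM I (\<lambda>_. \<rho>))"
    using measurable_compose[OF m1 meas_rho[of fst]] by (simp add: continuous_on_fst continuous_on_id)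
  have "{..<t} \<subseteq> I" using Suc.prems by auto
  then have m3: "(\<lambda>\<omega>. bias \<alpha> \<beta> x0 xs \<omega> t) \<in> borel_measurable (PiM I (\<lambda>_. \<rho>))"
    by (rule Suc.IH)
  show ?case
    using borel_measurable_continuous_Pair[OF m2 m3 cont_Jmv[of \<alpha> \<beta>]] by simp
qed

lemma meas_thP: "(\<lambda>\<omega>. bias \<alpha> \<beta> x0 xs \<omega> t) \<in> borel_measurable P"
  by (rule meas_th) simp

lemma indep_coords: "Q.indep_vars (\<lambda>_. \<rho>) (\<lambda>i \<omega>. \<omega> i) UNIV"
proof -
  have rv: "Q.random_variable \<rho> (\<lambda>\<omega>. \<omega> i)" for i
    by (rule measurable_component_singleton) simp
  have "distr P (PiM UNIV (\<lambda>_. \<rho>)) (\<lambda>x. \<lambda>i\<in>UNIV. x i) = P"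
    by (simp add: restrict_UNIV)
  moreover have "PiM UNIV (\<lambda>i. distr P \<rho> (\<lambda>\<omega>. \<omega> i)) = P"
    using PP.PiM_component by simp
  ultimately show ?thesis
    using Q.indep_vars_iff_distr_eq_PiM[where I="UNIV::nat set" and M'="\<lambda>_. \<rho>" and X="\<lambda>i \<omega>. \<omega> i", OF _ rv] by simp
qed

lemma distr_comp: "distr P \<rho> (\<lambda>\<omega>. \<omega> t) = \<rho>"
  using PP.PiM_component[of t] by simp

lemma indep_prod:
  fixes \<phi> :: "(real^'d) \<times> real \<Rightarrow> real" and \<psi> :: "real^('d+'d) \<Rightarrow> real"
  assumes m\<phi>: "\<phi> \<in> borel_measurable \<rho>" and i\<phi>: "integrable \<rho> \<phi>"
    and m\<psi>: "\<psi> \<in> borel_measurable borel" and i\<psi>: "integrable P (\<lambda>\<omega>. \<psi> (th t \<omega>))"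
  shows "integrable P (\<lambda>\<omega>. \<phi> (\<omega> t) * \<psi> (th t \<omega>))"
    and "(\<integral>\<omega>. \<phi> (\<omega> t) * \<psi> (th t \<omega>) \<partial>P) = (\<integral>z. \<phi> z \<partial>\<rho>) * (\<integral>\<omega>. \<psi> (th t \<omega>) \<partial>P)"
proof -
  have ind: "Q.indep_var (PiM {..<t} (\<lambda>_. \<rho>)) (\<lambda>\<omega>. restrict (\<lambda>i. \<omega> i) {..<t})
                         (PiM {t} (\<lambda>_. \<rho>)) (\<lambda>\<omega>. restrict (\<lambda>i. \<omega> i) {t})"
    by (rule Q.indep_var_restrict[OF indep_coords]) auto
  have Y2: "(\<lambda>r. \<psi> (bias \<alpha> \<beta> x0 xs r t)) \<in> borel_measurable (PiM {..<t} (\<lambda>_. \<rho>))"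
    using measurable_compose[OF meas_th[of t "{..<t}"] m\<psi>] by simp
  have mt': "(\<lambda>r. r t) \<in> measurable (PiM {t} (\<lambda>_. \<rho>)) \<rho>"
    by (rule measurable_component_singleton) simp
  have Y1: "(\<lambda>r. \<phi> (r t)) \<in> borel_measurable (PiM {t} (\<lambda>_. \<rho>))"
    using measurable_compose[OF mt' m\<phi>] by simp
  have ind2: "Q.indep_var borel ((\<lambda>r. \<psi> (bias \<alpha> \<beta> x0 xs r t)) \<circ> (\<lambda>\<omega>. restrict (\<lambda>i. \<omega> i) {..<t}))
                          borel ((\<lambda>r. \<phi> (r t)) \<circ> (\<lambda>\<omega>. restrict (\<lambda>i. \<omega> i) {t}))"
    by (rule Q.indep_var_compose[OF ind Y2 Y1])
  have e1: "((\<lambda>r. \<psi> (bias \<alpha> \<beta> x0 xs r t)) \<circ> (\<lambda>\<omega>. restrict (\<lambda>i. \<omega> i) {..<t})) = (\<lambda>\<omega>. \<psi> (th t \<omega>))"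
  proof
    fix \<omega> :: "nat \<Rightarrow> (real^'d) \<times> real"
    have "bias \<alpha> \<beta> x0 xs (restrict \<omega> {..<t}) t = bias \<alpha> \<beta> x0 xs \<omega> t"
      by (rule bias_local) simp
    then show "((\<lambda>r. \<psi> (bias \<alpha> \<beta> x0 xs r t)) \<circ> (\<lambda>\<omega>. restrict (\<lambda>i. \<omega> i) {..<t})) \<omega> = \<psi> (th t \<omega>)"
      by (simp add: o_def)
  qed
  have e2: "((\<lambda>r. \<phi> (r t)) \<circ> (\<lambda>\<omega>. restrict (\<lambda>i. \<omega> i) {t})) = (\<lambda>\<omega>. \<phi> (\<omega> t))"
    by (simp add: o_def)
  have ind3: "Q.indep_var borel (\<lambda>\<omega>. \<psi> (th t \<omega>)) borel (\<lambda>\<omega>. \<phi> (\<omega> t))"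
    using ind2 unfolding e1 e2 .
  have mt: "(\<lambda>\<omega>. \<omega> t) \<in> measurable P \<rho>" by (rule measurable_component_singleton) simp
  have i1: "integrable P (\<lambda>\<omega>. \<phi> (\<omega> t))"
    using integrable_distr_eq[OF mt m\<phi>] i\<phi> distr_comp by simp
  have int1: "(\<integral>\<omega>. \<phi> (\<omega> t) \<partial>P) = (\<integral>z. \<phi> z \<partial>\<rho>)"
    using integral_distr[OF mt m\<phi>] distr_comp by simp
  have "integrable P (\<lambda>\<omega>. \<psi> (th t \<omega>) * \<phi> (\<omega> t))"
    by (rule Q.indep_var_integrable[OF ind3 i\<psi> i1])
  then show "integrable P (\<lambda>\<omega>. \<phi> (\<omega> t) * \<psi> (th t \<omega>))" by (simp add: mult.commute)
  have "(\<integral>\<omega>. \<psi> (th t \<omega>) * \<phi> (\<omega> t) \<partial>P) = (\<integral>\<omega>. \<psi> (th t \<omega>) \<partial>P) * (\<integral>\<omega>. \<phi> (\<omega> t) \<partial>P)"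
    by (rule Q.indep_var_lebesgue_integral[OF ind3 i\<psi> i1])
  then show "(\<integral>\<omega>. \<phi> (\<omega> t) * \<psi> (th t \<omega>) \<partial>P) = (\<integral>z. \<phi> z \<partial>\<rho>) * (\<integral>\<omega>. \<psi> (th t \<omega>) \<partial>P)"
    by (simp add: mult.commute int1)
qed

end

lemma integral_double_sum':
  fixes f :: "'k::finite \<Rightarrow> 'l::finite \<Rightarrow> 'a \<Rightarrow> real"
  assumes "\<And>k l. integrable M (f k l)"
  shows "(\<integral>x. (\<Sum>k\<in>UNIV. \<Sum>l\<in>UNIV. f k l x) \<partial>M) = (\<Sum>k\<in>UNIV. \<Sum>l\<in>UNIV. (\<integral>x. f k l x \<partial>M))"
    and "integrable M (\<lambda>x. \<Sum>k\<in>UNIV. \<Sum>l\<in>UNIV. f k l x)"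
  using integral_double_sum[where f=f and M=M and c="\<lambda>k l. 1"] assms by simp_all

context main_setup
begin

lemma J_int: "integrable \<rho> (\<lambda>z. Jmat \<alpha> \<beta> (fst z) $ i $ k * Jmat \<alpha> \<beta> (fst z) $ j $ l)"
proof -
  have e: "Jmat \<alpha> \<beta> a $ i $ k * Jmat \<alpha> \<beta> a $ j $ l =
      Dm i k * Dm j l - (Dm i k * gam \<alpha> \<beta> j) * (a $ idx j * a $ idx l)
      - (gam \<alpha> \<beta> i * Dm j l) * (a $ idx i * a $ idx k)
      + (gam \<alpha> \<beta> i * gam \<alpha> \<beta> j) * (a $ idx i * a $ idx k * a $ idx j * a $ idx l)" for a :: "real^'d"
    unfolding Jmat_entry by (simp add: algebra_simps)
  show ?thesis unfolding e
    by (intro Bochner_Integration.integrable_add Bochner_Integration.integrable_diff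
        integrable_mult_right int_quad int_quart R.integrable_const)
qed

lemma meas_J: "(\<lambda>z. Jmat \<alpha> \<beta> (fst z) $ i $ k * Jmat \<alpha> \<beta> (fst z) $ j $ l) \<in> borel_measurable \<rho>"
  unfolding Jmat_entry by (intro meas_rho continuous_intros)

lemma th_Suc_nth: "th (Suc t) \<omega> $ i = (\<Sum>k\<in>UNIV. Jmat \<alpha> \<beta> (fst (\<omega> t)) $ i $ k * th t \<omega> $ k)"
  by (simp add: matrix_vector_mult_def)

lemma int_thth: "integrable P (\<lambda>\<omega>. th t \<omega> $ i * th t \<omega> $ j)"
proof (induction t arbitrary: i j)
  case 0 then show ?case by simp
next
  case (Suc t)
  have e: "th (Suc t) \<omega> $ i * th (Suc t) \<omega> $ j =
     (\<Sum>k\<in>UNIV. \<Sum>l\<in>UNIV. (Jmat \<alpha> \<beta> (fst (\<omega> t)) $ i $ k * Jmat \<alpha> \<beta> (fst (\<omega> t)) $ j $ l) * (th t \<omega> $ k * th t \<omega> $ l))" for \<omega>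
    unfolding th_Suc_nth sum_product by (simp add: mult_ac)
  have mpsi: "(\<lambda>v::real^('d+'d). v $ k * v $ l) \<in> borel_measurable borel" for k l
    by (intro borel_measurable_continuous_onI continuous_intros)
  have "integrable P (\<lambda>\<omega>. (\<lambda>z. Jmat \<alpha> \<beta> (fst z) $ i $ k * Jmat \<alpha> \<beta> (fst z) $ j $ l) (\<omega> t) * (\<lambda>v. v $ k * v $ l) (th t \<omega>))" for k l
    by (rule indep_prod(1)[OF meas_J J_int mpsi Suc.IH])
  then show ?case unfolding e
    by (intro integral_double_sum'(2)) simp
qed

definition Phi :: "real^('d+'d)^('d+'d) \<Rightarrow> real^('d+'d) \<Rightarrow> real" where
  "Phi B v = (\<integral>z. (Jmat \<alpha> \<beta> (fst z) *v v) \<bullet> (B *v (Jmat \<alpha> \<beta> (fst z) *v v)) \<partial>\<rho>)"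

definition qf :: "real^('d+'d)^('d+'d) \<Rightarrow> 'd+'d \<Rightarrow> 'd+'d \<Rightarrow> (real^'d) \<times> real \<Rightarrow> real" where
  "qf B k l z = (transpose (Jmat \<alpha> \<beta> (fst z)) ** B ** Jmat \<alpha> \<beta> (fst z)) $ k $ l"

lemma qf_expand: "qf B k l z = (\<Sum>j\<in>UNIV. \<Sum>i\<in>UNIV. B $ i $ j * (Jmat \<alpha> \<beta> (fst z) $ i $ k * Jmat \<alpha> \<beta> (fst z) $ j $ l))"
  unfolding qf_def by (simp add: matrix_matrix_mult_def transpose_def sum_distrib_left sum_distrib_right mult_ac)

lemma qf_int: "integrable \<rho> (qf B k l)"
  unfolding qf_expand by (intro integral_double_sum(2) J_int)

lemma qf_meas: "qf B k l \<in> borel_measurable \<rho>"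
  unfolding qf_expand by (intro borel_measurable_sum borel_measurable_times borel_measurable_const meas_J)

lemma quadJ: "(Jmat \<alpha> \<beta> (fst z) *v v) \<bullet> (B *v (Jmat \<alpha> \<beta> (fst z) *v v)) = (\<Sum>k\<in>UNIV. \<Sum>l\<in>UNIV. qf B k l z * (v $ k * v $ l))"
proof -
  have "(Jmat \<alpha> \<beta> (fst z) *v v) \<bullet> (B *v (Jmat \<alpha> \<beta> (fst z) *v v))
      = v \<bullet> ((transpose (Jmat \<alpha> \<beta> (fst z)) ** B ** Jmat \<alpha> \<beta> (fst z)) *v v)"
    by (rule quad_congr[symmetric])
  also have "\<dots> = (\<Sum>k\<in>UNIV. \<Sum>l\<in>UNIV. qf B k l z * (v $ k * v $ l))"
    unfolding quad_sum qf_def ..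
  finally show ?thesis .
qed

lemma Phi_expand: "Phi B v = (\<Sum>k\<in>UNIV. \<Sum>l\<in>UNIV. (v $ k * v $ l) * (\<integral>z. qf B k l z \<partial>\<rho>))"
proof -
  have "Phi B v = (\<integral>z. (\<Sum>k\<in>UNIV. \<Sum>l\<in>UNIV. (v $ k * v $ l) * qf B k l z) \<partial>\<rho>)"
    unfolding Phi_def quadJ by (simp add: mult.commute)
  also have "\<dots> = (\<Sum>k\<in>UNIV. \<Sum>l\<in>UNIV. (v $ k * v $ l) * (\<integral>z. qf B k l z \<partial>\<rho>))"
    by (rule integral_double_sum(1)) (rule qf_int)
  finally show ?thesis .
qed

definition F :: "nat \<Rightarrow> real^('d+'d)^('d+'d) \<Rightarrow> real" where
  "F t B = (\<integral>\<omega>. th t \<omega> \<bullet> (B *v th t \<omega>) \<partial>P)"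

lemma F_int: "integrable P (\<lambda>\<omega>. th t \<omega> \<bullet> (B *v th t \<omega>))"
  unfolding quad_sum by (intro integral_double_sum(2) int_thth)

lemma F_expand: "F t B = (\<Sum>k\<in>UNIV. \<Sum>l\<in>UNIV. B $ k $ l * (\<integral>\<omega>. th t \<omega> $ k * th t \<omega> $ l \<partial>P))"
  unfolding F_def quad_sum by (intro integral_double_sum(1) int_thth)

lemma Phi_int: "integrable P (\<lambda>\<omega>. Phi B (th t \<omega>))"
  unfolding Phi_expand by (simp only: mult.commute[of "_ $ _ * _ $ _"]) (intro integral_double_sum(2) int_thth)

lemma step_eq: "F (Suc t) B = (\<integral>\<omega>. Phi B (th t \<omega>) \<partial>P)"
proof -
  have mpsi: "(\<lambda>v::real^('d+'d). v $ k * v $ l) \<in> borel_measurable borel" for k l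
    by (intro borel_measurable_continuous_onI continuous_intros)
  note ip = indep_prod[OF qf_meas qf_int mpsi int_thth]
  have "F (Suc t) B = (\<integral>\<omega>. (\<Sum>k\<in>UNIV. \<Sum>l\<in>UNIV. qf B k l (\<omega> t) * (th t \<omega> $ k * th t \<omega> $ l)) \<partial>P)"
    unfolding F_def by (simp add: quadJ)
  also have "\<dots> = (\<Sum>k\<in>UNIV. \<Sum>l\<in>UNIV. (\<integral>\<omega>. qf B k l (\<omega> t) * (th t \<omega> $ k * th t \<omega> $ l) \<partial>P))"
    by (rule integral_double_sum'(1)) (rule ip(1))
  also have "\<dots> = (\<Sum>k\<in>UNIV. \<Sum>l\<in>UNIV. (\<integral>z. qf B k l z \<partial>\<rho>) * (\<integral>\<omega>. th t \<omega> $ k * th t \<omega> $ l \<partial>P))"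
    using ip(2) by simp
  also have "\<dots> = (\<integral>\<omega>. (\<Sum>k\<in>UNIV. \<Sum>l\<in>UNIV. (\<integral>z. qf B k l z \<partial>\<rho>) * (th t \<omega> $ k * th t \<omega> $ l)) \<partial>P)"
    by (rule integral_double_sum(1)[symmetric]) (rule int_thth)
  also have "\<dots> = (\<integral>\<omega>. Phi B (th t \<omega>) \<partial>P)"
    unfolding Phi_expand by (simp add: mult.commute)
  finally show ?thesis .
qed

end

context main_setup
begin

lemma F_step:
  fixes M :: "real^('d+'d)^('d+'d)"
  defines "B \<equiv> transpose M ** block H H H H ** M"
  shows "F (Suc t) B \<le> F t (transpose (Ablk \<alpha> \<beta> H) ** B ** Ablk \<alpha> \<beta> H)
           + \<kappa> * tr_inner B (Nb \<alpha> \<beta> H) * F t (block H H H H)"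
proof -
  let ?A = "Ablk \<alpha> \<beta> H"
  have "F (Suc t) B = (\<integral>\<omega>. Phi B (th t \<omega>) \<partial>P)" by (rule step_eq)
  also have "\<dots> \<le> (\<integral>\<omega>. th t \<omega> \<bullet> ((transpose ?A ** B ** ?A) *v th t \<omega>)
        + \<kappa> * tr_inner B (Nb \<alpha> \<beta> H) * (th t \<omega> \<bullet> (block H H H H *v th t \<omega>)) \<partial>P)"
  proof (rule integral_mono)
    show "integrable P (\<lambda>\<omega>. Phi B (th t \<omega>))" by (rule Phi_int)
    show "integrable P (\<lambda>\<omega>. th t \<omega> \<bullet> ((transpose ?A ** B ** ?A) *v th t \<omega>)
        + \<kappa> * tr_inner B (Nb \<alpha> \<beta> H) * (th t \<omega> \<bullet> (block H H H H *v th t \<omega>)))"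
      using F_int by simp
    fix \<omega>
    show "Phi B (th t \<omega>) \<le> th t \<omega> \<bullet> ((transpose ?A ** B ** ?A) *v th t \<omega>)
        + \<kappa> * tr_inner B (Nb \<alpha> \<beta> H) * (th t \<omega> \<bullet> (block H H H H *v th t \<omega>))"
      unfolding Phi_def B_def by (rule PW(2))
  qed
  also have "\<dots> = F t (transpose ?A ** B ** ?A) + \<kappa> * tr_inner B (Nb \<alpha> \<beta> H) * F t (block H H H H)"
    unfolding F_def using F_int by simp
  finally show ?thesis .
qed

definition G :: "real^('d+'d)^('d+'d) \<Rightarrow> nat \<Rightarrow> real" where
  "G M s = tr_inner (transpose M ** block H H H H ** M)
      (mpow (Ablk \<alpha> \<beta> H) s ** Nb \<alpha> \<beta> H ** transpose (mpow (Ablk \<alpha> \<beta> H) s))"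

lemma G_shift: "G (M ** Ablk \<alpha> \<beta> H) s = G M (Suc s)"
proof -
  let ?A = "Ablk \<alpha> \<beta> H" and ?U = "block H H H H" and ?N = "Nb \<alpha> \<beta> H"
  have "transpose (M ** ?A) ** ?U ** (M ** ?A) = transpose ?A ** (transpose M ** ?U ** M) ** ?A"
    by (simp add: matrix_transpose_mul matrix_mul_assoc)
  then have "G (M ** ?A) s = tr_inner (transpose M ** ?U ** M) (?A ** (mpow ?A s ** ?N ** transpose (mpow ?A s)) ** transpose ?A)"
    unfolding G_def by (simp add: tr_inner_congr)
  also have "?A ** (mpow ?A s ** ?N ** transpose (mpow ?A s)) ** transpose ?A = mpow ?A (Suc s) ** ?N ** transpose (mpow ?A (Suc s))"
    by (simp add: matrix_transpose_mul matrix_mul_assoc)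
  finally show ?thesis unfolding G_def .
qed

lemma quad_shift: "(mpow (Ablk \<alpha> \<beta> H) T *v v) \<bullet> ((transpose (M ** Ablk \<alpha> \<beta> H) ** block H H H H ** (M ** Ablk \<alpha> \<beta> H)) *v (mpow (Ablk \<alpha> \<beta> H) T *v v))
   = (mpow (Ablk \<alpha> \<beta> H) (Suc T) *v v) \<bullet> ((transpose M ** block H H H H ** M) *v (mpow (Ablk \<alpha> \<beta> H) (Suc T) *v v))"
  unfolding quad_congr by (simp add: matrix_vector_mul_assoc matrix_mul_assoc)

lemma main_ind:
  "F T (transpose M ** block H H H H ** M) \<le>
     (mpow (Ablk \<alpha> \<beta> H) T *v bvec 0 (x0 - xs)) \<bullet> ((transpose M ** block H H H H ** M) *v (mpow (Ablk \<alpha> \<beta> H) T *v bvec 0 (x0 - xs)))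
     + (\<Sum>k<T. \<kappa> * G M (T - k - 1) * F k (block H H H H))"
proof (induction T arbitrary: M)
  case 0
  show ?case unfolding F_def by (simp add: Q.prob_space)
next
  case (Suc T)
  let ?A = "Ablk \<alpha> \<beta> H" and ?U = "block H H H H" and ?N = "Nb \<alpha> \<beta> H"
  let ?B = "transpose M ** ?U ** M"
  let ?v = "bvec 0 (x0 - xs)"
  have eqB: "transpose ?A ** ?B ** ?A = transpose (M ** ?A) ** ?U ** (M ** ?A)"
    by (simp add: matrix_transpose_mul matrix_mul_assoc)
  have "F (Suc T) ?B \<le> F T (transpose ?A ** ?B ** ?A) + \<kappa> * tr_inner ?B ?N * F T ?U"
    by (rule F_step)
  also have "F T (transpose ?A ** ?B ** ?A) \<le>
     (mpow ?A T *v ?v) \<bullet> ((transpose (M ** ?A) ** ?U ** (M ** ?A)) *v (mpow ?A T *v ?v))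
     + (\<Sum>k<T. \<kappa> * G (M ** ?A) (T - k - 1) * F k ?U)"
    unfolding eqB by (rule Suc.IH)
  also have "(mpow ?A T *v ?v) \<bullet> ((transpose (M ** ?A) ** ?U ** (M ** ?A)) *v (mpow ?A T *v ?v))
      = (mpow ?A (Suc T) *v ?v) \<bullet> (?B *v (mpow ?A (Suc T) *v ?v))" by (rule quad_shift)
  also have "(\<Sum>k<T. \<kappa> * G (M ** ?A) (T - k - 1) * F k ?U) = (\<Sum>k<T. \<kappa> * G M (Suc T - k - 1) * F k ?U)"
  proof (intro sum.cong refl)
    fix k assume "k \<in> {..<T}"
    then have "Suc (T - k - 1) = Suc T - k - 1" by auto
    then show "\<kappa> * G (M ** ?A) (T - k - 1) * F k ?U = \<kappa> * G M (Suc T - k - 1) * F k ?U"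
      by (simp add: G_shift)
  qed
  also have "tr_inner ?B ?N = G M (Suc T - T - 1)" unfolding G_def by simp
  finally show ?case by (simp add: add.assoc)
qed

lemma f_eq: "tr_inner (block H H H H) (\<integral>\<omega>. outer (th t \<omega>) (th t \<omega>) \<partial>P) = F t (block H H H H)"
proof -
  have meas: "(\<lambda>\<omega>. outer (th t \<omega>) (th t \<omega>)) \<in> borel_measurable P"
    by (rule borel_measurable_continuous_on[where f="\<lambda>v. outer v v", OF _ meas_thP])
       (unfold outer_def, intro continuous_intros)
  have int: "integrable P (\<lambda>\<omega>. outer (th t \<omega>) (th t \<omega>))"
  proof (rule integrable_vec[OF meas])
    fix i
    show "integrable P (\<lambda>\<omega>. outer (th t \<omega>) (th t \<omega>) $ i)"
    proof (rule integrable_vec)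
      show "(\<lambda>\<omega>. outer (th t \<omega>) (th t \<omega>) $ i) \<in> borel_measurable P"
        by (rule borel_measurable_continuous_on[where f="\<lambda>m. m $ i", OF _ meas])
           (intro continuous_intros)
    next
      fix j show "integrable P (\<lambda>\<omega>. outer (th t \<omega>) (th t \<omega>) $ i $ j)"
        unfolding outer_def using int_thth by simp
    qed
  qed
  show ?thesis
    unfolding tr_inner_sum integral_mat_nth[OF int] F_expand by (simp add: outer_def)
qed

end

theorem lemma8:
  fixes \<rho> :: "((real^'d) \<times> real) measure"
    and H :: "real^'d^'d" and L \<kappa> \<alpha> \<beta> :: real and x0 xs :: "real^'d"
  assumes prob: "prob_space \<rho>"
    and sets_rho: "sets \<rho> = sets borel"
    and mom_a: "integrable \<rho> (\<lambda>(a, b). (norm a)\<^sup>2)"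
    and mom_b: "integrable \<rho> (\<lambda>(a, b). b\<^sup>2)"
    and H_def: "H = (\<integral>z. outer (fst z) (fst z) \<partial>\<rho>)"
    and H_inv: "invertible H"
    and L_eig: "\<exists>v. v \<noteq> 0 \<and> H *v v = L *\<^sub>R v"
    and L_max: "\<And>\<mu> v. v \<noteq> 0 \<Longrightarrow> H *v v = \<mu> *\<^sub>R v \<Longrightarrow> \<mu> \<le> L"
    and xs_min: "\<And>x. (1/2) * (\<integral>z. (x \<bullet> fst z - snd z)\<^sup>2 \<partial>\<rho>)
                     \<ge> (1/2) * (\<integral>z. (xs \<bullet> fst z - snd z)\<^sup>2 \<partial>\<rho>)"
    and kappa: "\<And>M::real^'d^'d. psd M \<Longrightarrow>
         integrable \<rho> (\<lambda>z. (fst z \<bullet> (M *v fst z)) *\<^sub>R outer (fst z) (fst z)) \<and>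
         loewner_le (\<integral>z. (fst z \<bullet> (M *v fst z)) *\<^sub>R outer (fst z) (fst z) \<partial>\<rho>)
                    ((\<kappa> * mtrace (M ** H)) *\<^sub>R H)"
    and step: "0 < \<alpha>" "\<alpha> \<le> \<beta>" "\<beta> \<le> 1 / L"
  shows
    "let A = block (mat 1 - \<beta> *\<^sub>R H) (mat 1 - \<beta> *\<^sub>R H) (- (\<alpha> *\<^sub>R H)) (mat 1 - \<alpha> *\<^sub>R H);
         \<Upsilon> = block H H H H;
         \<N> = block ((\<beta>\<^sup>2) *\<^sub>R H) ((\<alpha> * \<beta>) *\<^sub>R H) ((\<alpha> * \<beta>) *\<^sub>R H) ((\<alpha>\<^sup>2) *\<^sub>R H);
         P = PiM UNIV (\<lambda>_::nat. \<rho>);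
         f = (\<lambda>t. tr_inner \<Upsilon> (\<integral>\<omega>. outer (bias \<alpha> \<beta> x0 xs \<omega> t) (bias \<alpha> \<beta> x0 xs \<omega> t) \<partial>P));
         g = (\<lambda>s. \<kappa> * tr_inner \<Upsilon> (mpow A s ** \<N> ** transpose (mpow A s)))
     in \<forall>T::nat. f T \<le> min (1 / \<alpha>) (8 * (real T + 1) / \<beta>) * (norm (x0 - xs))\<^sup>2
                       + (\<Sum>k<T. g (T - k - 1) * f k)"
proof -
  have rs: "rho_setup \<rho> H \<kappa>"
    by (rule rho_setup.intro) (fact prob sets_rho mom_a H_def kappa)+
  interpret main_setup \<rho> H \<kappa> \<alpha> \<beta> x0 xs
    using rs by (simp add: main_setup_def)
  have eig: "0 < \<mu> \<and> \<mu> \<le> L" if e0: "e \<noteq> 0" and he: "H *v e = \<mu> *\<^sub>R e" for e \<mu>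
  proof
    show "\<mu> \<le> L" by (rule L_max[OF e0 he])
    have ee: "0 < e \<bullet> e" using e0 by simp
    have "0 \<le> e \<bullet> (H *v e)" by (rule H_psd)
    then have "0 \<le> \<mu> * (e \<bullet> e)" using he by simp
    then have mu0: "0 \<le> \<mu>" using ee by (simp add: zero_le_mult_iff)
    have "\<mu> \<noteq> 0"
    proof
      assume "\<mu> = 0"
      then have "H *v e = 0" using he by simp
      obtain Hi where "Hi ** H = mat 1" using H_inv unfolding invertible_def by blast
      then have "e = Hi *v (H *v e)" by (simp add: matrix_vector_mul_assoc)
      also have "\<dots> = 0" using \<open>H *v e = 0\<close> by simp
      finally show False using e0 by simp
    qed
    then show "0 < \<mu>" using mu0 by simp
  qed
  show ?thesis
    unfolding Let_def
  proof (fold Ablk_def Nb_def, intro allI)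
    fix T
    let ?U = "block H H H H" and ?A = "Ablk \<alpha> \<beta> H" and ?N = "Nb \<alpha> \<beta> H"
    have fe: "tr_inner ?U (\<integral>\<omega>. outer (bias \<alpha> \<beta> x0 xs \<omega> t) (bias \<alpha> \<beta> x0 xs \<omega> t) \<partial>P) = F t ?U" for t
      by (rule f_eq)
    have mi: "F T ?U \<le> (mpow ?A T *v bvec 0 (x0 - xs)) \<bullet> (?U *v (mpow ?A T *v bvec 0 (x0 - xs)))
        + (\<Sum>k<T. \<kappa> * G (mat 1) (T - k - 1) * F k ?U)"
      using main_ind[of T "mat 1"] by simp
    have db: "(mpow ?A T *v bvec 0 (x0 - xs)) \<bullet> (?U *v (mpow ?A T *v bvec 0 (x0 - xs)))
        \<le> min (1 / \<alpha>) (8 * (real T + 1) / \<beta>) * (norm (x0 - xs))\<^sup>2"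
      by (rule det_bound[OF H_sym eig step])
    have ge: "\<kappa> * G (mat 1) s = \<kappa> * tr_inner ?U (mpow ?A s ** ?N ** transpose (mpow ?A s))" for s
      unfolding G_def by simp
    show "tr_inner ?U (\<integral>\<omega>. outer (bias \<alpha> \<beta> x0 xs \<omega> T) (bias \<alpha> \<beta> x0 xs \<omega> T) \<partial>P)
         \<le> min (1 / \<alpha>) (8 * (real T + 1) / \<beta>) * (norm (x0 - xs))\<^sup>2 +
           (\<Sum>k<T. \<kappa> * tr_inner ?U (mpow ?A (T - k - 1) ** ?N ** transpose (mpow ?A (T - k - 1))) *
                tr_inner ?U (\<integral>\<omega>. outer (bias \<alpha> \<beta> x0 xs \<omega> k) (bias \<alpha> \<beta> x0 xs \<omega> k) \<partial>P))"
      unfolding fe ge[symmetric] using mi db by linarith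
  qed
qed

end
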